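(* Let $|\Phi\rangle=\sum_{z\in F^d,y\in F}\phi_{z,y}|z\rangle|y\rangle$ be a pure state with $\phi_z:=\big(\sum_y|\phi_{z,y}|^2\big)^{1/2}>0$ for every $z\in F^d$. Let $\gamma=V_{QLDT}(|\Phi\rangle,G)$ and $N=\frac{|F|^d-1}{|F|-1}$, and assume $\gamma\ge |F|^{-1}$. Then $$\Big(\gamma-\frac1{|F|}\Big)^2\le \frac{1}{|F|^{d}N}\sum_{z\in F^d}\sum_{\ell\in L(z)}\frac{|\phi_{z,g_\ell(z)}|^2}{\phi_z^2},$$ where $L(z)$ is the set of the $N$ lines containing $z$. Consequently there exists a (deterministic) function $f':F^d\to F$ with $\mathrm{Agr}[f',G]\ge(\gamma-|F|^{-1})^2$.
   Context: Setting. - $F$ is a finite field with $|F|=2^a$, $d\ge2$ and $r\ge0$ are integers; $\mathcal H_{d+1}=\mathbb C^{|F|^{d+1}}$ with basis $|z\rangle|y\rangle$, $z\in F^d$, $y\in F$. - $L$ is the set of lines of $F^d$. - $G=\{g_\ell\}_{\ell\in L}$ with each $g_\ell:\ell\to F$ a polynomial of degree $\le r$ along the line. Quantum low degree test. - Step I: uniformly random invertible linear $E:F^d\to F^d$. Apply $|z\rangle|y\rangle\mapsto|E(z)\rangle|y\rangle$, then measure the first $d-1$ registers with outcome $b$, obtaining the line $\ell=\{u+(v-u)t\}$ with $E(u)=(b,0)$, $E(v)=(b,1)$, and the collapsed state $|\Phi'\rangle$ of the last two registers. - Step II: with $|e_1\rangle=|F|^{-1/2}\sum_t|t\rangle|g_\ell(u+(v-u)t)\rangle$,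 accept with probability $|\langle e_1|\Phi'\rangle|^2$. - $V_{QLDT}(|\Phi\rangle,G)$ is the overall acceptance probability. Agreement. For $f':F^d\to F$: $\mathrm{Agr}[f',g_\ell]=\Pr_{z\in\ell}[f'(z)=g_\ell(z)]$ and $\mathrm{Agr}[f',G]=\mathbb E_{\ell\in L}\mathrm{Agr}[f',g_\ell]$, all under uniform distributions. *)

theory Defs
  imports Complex_Main "HOL-Computational_Algebra.Polynomial"
begin

text \<open>Points of F^d are represented as functions nat => F vanishing at all indices >= d;
  coordinate d-1 is the last register.\<close>

definition vspace :: "nat \<Rightarrow> (nat \<Rightarrow> 'f::zero) set" where
  "vspace d = {x. \<forall>i. d \<le> i \<longrightarrow> x i = 0}"

definition mat_apply :: "nat \<Rightarrow> (nat \<Rightarrow> nat \<Rightarrow> 'f::comm_ring_1) \<Rightarrow> (nat \<Rightarrow> 'f) \<Rightarrow> (nat \<Rightarrow> 'f)" where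
  "mat_apply d M x = (\<lambda>i. if i < d then (\<Sum>j<d. M i j * x j) else 0)"

definition GL :: "nat \<Rightarrow> (nat \<Rightarrow> nat \<Rightarrow> 'f::field) set" where
  "GL d = {M. (\<forall>i j. d \<le> i \<or> d \<le> j \<longrightarrow> M i j = 0)
              \<and> bij_betw (mat_apply d M) (vspace d) (vspace d)}"

definition line_through :: "(nat \<Rightarrow> 'f::comm_ring_1) \<Rightarrow> (nat \<Rightarrow> 'f) \<Rightarrow> (nat \<Rightarrow> 'f) set" where
  "line_through u w = {(\<lambda>i. u i + t * w i) | t. True}"

definition lines :: "nat \<Rightarrow> (nat \<Rightarrow> 'f::comm_ring_1) set set" where
  "lines d = {line_through u w | u w. u \<in> vspace d \<and> w \<in> vspace d \<and> w \<noteq> (\<lambda>_. 0)}"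

definition low_degree_family :: "nat \<Rightarrow> nat \<Rightarrow> ((nat \<Rightarrow> 'f::field) set \<Rightarrow> (nat \<Rightarrow> 'f) \<Rightarrow> 'f) \<Rightarrow> bool" where
  "low_degree_family d r g \<longleftrightarrow>
     (\<forall>l\<in>lines d. \<exists>u w p. u \<in> vspace d \<and> w \<in> vspace d \<and> w \<noteq> (\<lambda>_. 0) \<and>
        l = line_through u w \<and> degree p \<le> r \<and> (\<forall>t. g l (\<lambda>i. u i + t * w i) = poly p t))"

definition amp_norm :: "((nat \<Rightarrow> 'f::finite) \<Rightarrow> 'f \<Rightarrow> complex) \<Rightarrow> (nat \<Rightarrow> 'f) \<Rightarrow> real" where
  "amp_norm \<phi> z = sqrt (\<Sum>y\<in>UNIV. (cmod (\<phi> z y))\<^sup>2)"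

text \<open>Step I: E^{-1}, applied to the register value (b,s) with b the measured outcome.\<close>
definition Einv :: "nat \<Rightarrow> (nat \<Rightarrow> nat \<Rightarrow> 'f::field) \<Rightarrow> (nat \<Rightarrow> 'f) \<Rightarrow> (nat \<Rightarrow> 'f)" where
  "Einv d M = inv_into (vspace d) (mat_apply d M)"

definition bt :: "nat \<Rightarrow> (nat \<Rightarrow> 'f) \<Rightarrow> 'f \<Rightarrow> (nat \<Rightarrow> 'f)" where
  "bt d b s = b(d - 1 := s)"

text \<open>Probability of outcome b when measuring the first d-1 registers of E|Phi>.\<close>
definition meas_prob :: "nat \<Rightarrow> ((nat \<Rightarrow> 'f::{finite,field}) \<Rightarrow> 'f \<Rightarrow> complex) \<Rightarrow> (nat \<Rightarrow> nat \<Rightarrow> 'f) \<Rightarrow> (nat \<Rightarrow> 'f) \<Rightarrow> real" where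
  "meas_prob d \<phi> M b = (\<Sum>s\<in>UNIV. \<Sum>y\<in>UNIV. (cmod (\<phi> (Einv d M (bt d b s)) y))\<^sup>2)"

text \<open>Collapsed state |Phi'> of the last two registers.\<close>
definition collapsed :: "nat \<Rightarrow> ((nat \<Rightarrow> 'f::{finite,field}) \<Rightarrow> 'f \<Rightarrow> complex) \<Rightarrow> (nat \<Rightarrow> nat \<Rightarrow> 'f) \<Rightarrow> (nat \<Rightarrow> 'f) \<Rightarrow> 'f \<Rightarrow> 'f \<Rightarrow> complex" where
  "collapsed d \<phi> M b s y = \<phi> (Einv d M (bt d b s)) y / complex_of_real (sqrt (meas_prob d \<phi> M b))"

definition line_u :: "nat \<Rightarrow> (nat \<Rightarrow> nat \<Rightarrow> 'f::field) \<Rightarrow> (nat \<Rightarrow> 'f) \<Rightarrow> (nat \<Rightarrow> 'f)" where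
  "line_u d M b = Einv d M (bt d b 0)"

definition line_v :: "nat \<Rightarrow> (nat \<Rightarrow> nat \<Rightarrow> 'f::field) \<Rightarrow> (nat \<Rightarrow> 'f) \<Rightarrow> (nat \<Rightarrow> 'f)" where
  "line_v d M b = Einv d M (bt d b 1)"

definition measured_line :: "nat \<Rightarrow> (nat \<Rightarrow> nat \<Rightarrow> 'f::field) \<Rightarrow> (nat \<Rightarrow> 'f) \<Rightarrow> (nat \<Rightarrow> 'f) set" where
  "measured_line d M b = line_through (line_u d M b) (\<lambda>i. line_v d M b i - line_u d M b i)"

definition e1 :: "nat \<Rightarrow> ((nat \<Rightarrow> 'f::{finite,field}) set \<Rightarrow> (nat \<Rightarrow> 'f) \<Rightarrow> 'f) \<Rightarrow> (nat \<Rightarrow> nat \<Rightarrow> 'f) \<Rightarrow> (nat \<Rightarrow> 'f) \<Rightarrow> 'f \<Rightarrow> 'f \<Rightarrow> complex" where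
  "e1 d g M b t y =
     (if y = g (measured_line d M b)
               (\<lambda>i. line_u d M b i + (line_v d M b i - line_u d M b i) * t)
      then complex_of_real (1 / sqrt (real (card (UNIV :: 'f set)))) else 0)"

definition accept_prob :: "nat \<Rightarrow> ((nat \<Rightarrow> 'f::{finite,field}) \<Rightarrow> 'f \<Rightarrow> complex) \<Rightarrow> ((nat \<Rightarrow> 'f) set \<Rightarrow> (nat \<Rightarrow> 'f) \<Rightarrow> 'f) \<Rightarrow> (nat \<Rightarrow> nat \<Rightarrow> 'f) \<Rightarrow> (nat \<Rightarrow> 'f) \<Rightarrow> real" where
  "accept_prob d \<phi> g M b =
     (cmod (\<Sum>t\<in>UNIV. \<Sum>y\<in>UNIV. cnj (e1 d g M b t y) * collapsed d \<phi> M b t y))\<^sup>2"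

definition V_QLDT :: "nat \<Rightarrow> ((nat \<Rightarrow> 'f::{finite,field}) \<Rightarrow> 'f \<Rightarrow> complex) \<Rightarrow> ((nat \<Rightarrow> 'f) set \<Rightarrow> (nat \<Rightarrow> 'f) \<Rightarrow> 'f) \<Rightarrow> real" where
  "V_QLDT d \<phi> g = (\<Sum>M\<in>GL d. \<Sum>b\<in>vspace (d - 1). meas_prob d \<phi> M b * accept_prob d \<phi> g M b) / real (card (GL d :: (nat \<Rightarrow> nat \<Rightarrow> 'f) set))"

definition Agr_line :: "((nat \<Rightarrow> 'f) \<Rightarrow> 'f) \<Rightarrow> (nat \<Rightarrow> 'f) set \<Rightarrow> ((nat \<Rightarrow> 'f) \<Rightarrow> 'f) \<Rightarrow> real" where
  "Agr_line f l gl = real (card {z\<in>l. f z = gl z}) / real (card l)"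

definition Agr :: "nat \<Rightarrow> ((nat \<Rightarrow> 'f::{finite,field}) \<Rightarrow> 'f) \<Rightarrow> ((nat \<Rightarrow> 'f) set \<Rightarrow> (nat \<Rightarrow> 'f) \<Rightarrow> 'f) \<Rightarrow> real" where
  "Agr d f g = (\<Sum>l\<in>lines d. Agr_line f l (g l)) / real (card (lines d :: (nat \<Rightarrow> 'f) set set))"

end

theory Submission
  imports Defs "HOL-Analysis.Convex"
begin
lemma finite_vspace: "finite (vspace d :: (nat \<Rightarrow> 'f::{finite,zero}) set)"
proof -
  have "vspace d = {f. \<forall>x. (x \<in> {..<d} \<longrightarrow> f x \<in> (UNIV::'f set)) \<and> (x \<notin> {..<d} \<longrightarrow> f x = 0)}"
    by (auto simp: vspace_def)
  then show ?thesis using finite_set_of_finite_funs[of "{..<d}" "UNIV::'f set" 0] by simp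
qed

lemma card_vspace: "card (vspace d :: (nat \<Rightarrow> 'f::{finite,zero}) set) = card (UNIV::'f set) ^ d"
proof (induction d)
  case 0
  have "vspace 0 = {(\<lambda>_. 0::'f)}" by (auto simp: vspace_def)
  then show ?case by simp
next
  case (Suc d)
  have "bij_betw (\<lambda>(x,c). x(d := c)) (vspace d \<times> (UNIV::'f set)) (vspace (Suc d))"
    unfolding bij_betw_def
  proof
    show "inj_on (\<lambda>(x,c). x(d := c)) (vspace d \<times> (UNIV::'f set))"
    proof (rule inj_onI, clarsimp)
      fix x c x' c'
      assume x: "x \<in> vspace d" and x': "x' \<in> vspace d" and e: "x(d := c) = x'(d := c')"
      have "c = c'" using fun_cong[OF e, of d] by simp
      moreover have "x i = x' i" for i
        using fun_cong[OF e, of i] x x' by (cases "i = d") (auto simp: vspace_def)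
      ultimately show "x = x' \<and> c = c'" by auto
    qed
    show "(\<lambda>(x,c). x(d := c)) ` (vspace d \<times> (UNIV::'f set)) = vspace (Suc d)"
    proof
      show "(\<lambda>(x,c). x(d := c)) ` (vspace d \<times> (UNIV::'f set)) \<subseteq> vspace (Suc d)"
        by (auto simp: vspace_def)
      show "vspace (Suc d) \<subseteq> (\<lambda>(x,c). x(d := c)) ` (vspace d \<times> (UNIV::'f set))"
      proof
        fix y :: "nat \<Rightarrow> 'f" assume y: "y \<in> vspace (Suc d)"
        have "y = (\<lambda>(x,c). x(d := c)) (y(d:=0), y d)" by auto
        moreover have "(y(d:=0), y d) \<in> vspace d \<times> UNIV" using y by (auto simp: vspace_def)
        ultimately show "y \<in> (\<lambda>(x,c). x(d := c)) ` (vspace d \<times> (UNIV::'f set))" by blast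
      qed
    qed
  qed
  then have "card ((vspace d :: (nat \<Rightarrow> 'f) set) \<times> (UNIV::'f set)) = card (vspace (Suc d) :: (nat \<Rightarrow> 'f) set)"
    by (rule bij_betw_same_card)
  then show ?case using Suc by (simp add: card_cartesian_product mult.commute)
qed

definition lin_on :: "nat \<Rightarrow> ((nat \<Rightarrow> 'f::field) \<Rightarrow> (nat \<Rightarrow> 'f)) \<Rightarrow> bool" where
  "lin_on d f \<longleftrightarrow> (\<forall>x\<in>vspace d. f x \<in> vspace d) \<and>
     (\<forall>x\<in>vspace d. \<forall>y\<in>vspace d. \<forall>c. f (\<lambda>i. x i + c * y i) = (\<lambda>i. f x i + c * f y i))"

definition unitv :: "nat \<Rightarrow> nat \<Rightarrow> 'f::field" where
  "unitv j = (\<lambda>i. if i = j then 1 else 0)"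

definition mat_of :: "nat \<Rightarrow> ((nat \<Rightarrow> 'f::field) \<Rightarrow> (nat \<Rightarrow> 'f)) \<Rightarrow> nat \<Rightarrow> nat \<Rightarrow> 'f" where
  "mat_of d f = (\<lambda>i j. if i < d \<and> j < d then f (unitv j) i else 0)"

lemma zero_vspace: "(\<lambda>_. 0) \<in> vspace d" by (simp add: vspace_def)

lemma unitv_vspace: "j < d \<Longrightarrow> unitv j \<in> vspace d" by (simp add: vspace_def unitv_def)

lemma lin_onD: "lin_on d f \<Longrightarrow> x \<in> vspace d \<Longrightarrow> y \<in> vspace d \<Longrightarrow>
   f (\<lambda>i. x i + c * y i) = (\<lambda>i. f x i + c * f y i)"
  unfolding lin_on_def by blast

lemma lin_onV: "lin_on d f \<Longrightarrow> x \<in> vspace d \<Longrightarrow> f x \<in> vspace d"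
  unfolding lin_on_def by blast

lemma lin_zero: assumes "lin_on d f" shows "f (\<lambda>_. 0) = (\<lambda>_. 0)"
proof
  fix i
  have "f (\<lambda>_. 0) = (\<lambda>i. f (\<lambda>_. 0) i + f (\<lambda>_. 0) i)"
    using lin_onD[OF assms zero_vspace zero_vspace, of 1] by simp
  from fun_cong[OF this, of i] show "f (\<lambda>_. 0) i = 0" by (metis add_cancel_right_right)
qed

lemma lin_sum:
  assumes "lin_on d f" "finite J" "\<And>j. j \<in> J \<Longrightarrow> v j \<in> vspace d"
  shows "f (\<lambda>i. \<Sum>j\<in>J. c j * v j i) = (\<lambda>i. \<Sum>j\<in>J. c j * f (v j) i)
     \<and> (\<lambda>i. \<Sum>j\<in>J. c j * v j i) \<in> vspace d"
  using assms(2,3)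
proof (induction J rule: finite_induct)
  case empty
  then show ?case using lin_zero[OF assms(1)] by (simp add: zero_vspace)
next
  case (insert a J)
  let ?S = "(\<lambda>i. \<Sum>j\<in>J. c j * v j i)"
  have IH: "f ?S = (\<lambda>i. \<Sum>j\<in>J. c j * f (v j) i)" "?S \<in> vspace d" using insert by auto
  have va: "v a \<in> vspace d" using insert by auto
  have eq: "(\<lambda>i. \<Sum>j\<in>insert a J. c j * v j i) = (\<lambda>i. ?S i + c a * v a i)"
    using insert by (simp add: fun_eq_iff add.commute)
  have "f (\<lambda>i. ?S i + c a * v a i) = (\<lambda>i. f ?S i + c a * f (v a) i)"
    using lin_onD[OF assms(1) IH(2) va] by blast
  then have 1: "f (\<lambda>i. \<Sum>j\<in>insert a J. c j * v j i) = (\<lambda>i. \<Sum>j\<in>insert a J. c j * f (v j) i)"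
    using insert IH(1) eq by (simp add: fun_eq_iff add.commute)
  have 2: "(\<lambda>i. \<Sum>j\<in>insert a J. c j * v j i) \<in> vspace d"
    using IH(2) va eq by (simp add: vspace_def)
  show ?case using 1 2 by blast
qed

lemma vspace_expand:
  assumes "x \<in> vspace d" shows "(\<lambda>i. \<Sum>j\<in>{..<d}. x j * unitv j i) = x"
proof
  fix i
  show "(\<Sum>j\<in>{..<d}. x j * unitv j i) = x i"
  proof (cases "i < d")
    case True
    then show ?thesis by (simp add: unitv_def if_distrib cong: if_cong)
  next
    case False
    then have "(\<Sum>j\<in>{..<d}. x j * unitv j i) = 0" by (auto simp: unitv_def intro!: sum.neutral)
    then show ?thesis using False assms by (simp add: vspace_def)
  qed
qed

lemma mat_of_apply:
  assumes "lin_on d f" "x \<in> vspace d"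
  shows "mat_apply d (mat_of d f) x = f x"
proof -
  have "f x = f (\<lambda>i. \<Sum>j\<in>{..<d}. x j * unitv j i)" using vspace_expand[OF assms(2)] by simp
  also have "\<dots> = (\<lambda>i. \<Sum>j\<in>{..<d}. x j * f (unitv j) i)"
    using lin_sum[OF assms(1), of "{..<d}" unitv x] unitv_vspace by blast
  finally have fx: "f x = (\<lambda>i. \<Sum>j\<in>{..<d}. x j * f (unitv j) i)" .
  have fxv: "f x \<in> vspace d" using assms unfolding lin_on_def by blast
  show ?thesis
  proof
    fix i
    show "mat_apply d (mat_of d f) x i = f x i"
    proof (cases "i < d")
      case True
      then show ?thesis using fx by (simp add: mat_apply_def mat_of_def mult.commute)
    next
      case False
      then show ?thesis using fxv by (simp add: mat_apply_def vspace_def)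
    qed
  qed
qed

lemma mat_apply_vspace: "mat_apply d M x \<in> vspace d"
  by (simp add: mat_apply_def vspace_def)

lemma lin_mat_apply: "lin_on d (mat_apply d M)"
  unfolding lin_on_def
proof (intro conjI ballI allI)
  fix x :: "nat \<Rightarrow> 'a" show "mat_apply d M x \<in> vspace d" by (rule mat_apply_vspace)
next
  fix x y :: "nat \<Rightarrow> 'a" and c
  show "mat_apply d M (\<lambda>i. x i + c * y i) = (\<lambda>i. mat_apply d M x i + c * mat_apply d M y i)"
  proof
    fix i
    have "(\<Sum>j<d. M i j * (x j + c * y j)) = (\<Sum>j<d. M i j * x j) + c * (\<Sum>j<d. M i j * y j)"
      by (simp add: sum.distrib sum_distrib_left distrib_left mult.left_commute)
    then show "mat_apply d M (\<lambda>i. x i + c * y i) i = mat_apply d M x i + c * mat_apply d M y i"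
      by (simp add: mat_apply_def)
  qed
qed

lemma mat_of_mat_apply:
  assumes "M \<in> GL d" shows "mat_of d (mat_apply d M) = M"
proof (intro ext)
  fix i j
  show "mat_of d (mat_apply d M) i j = M i j"
  proof (cases "i < d \<and> j < d")
    case True
    then show ?thesis by (simp add: mat_of_def mat_apply_def unitv_def if_distrib cong: if_cong)
  next
    case False
    then show ?thesis using assms by (auto simp: mat_of_def GL_def)
  qed
qed

lemma GL_eqI:
  assumes "M \<in> GL d" "M' \<in> GL d" "\<And>x. x \<in> vspace d \<Longrightarrow> mat_apply d M x = mat_apply d M' x"
  shows "M = M'"
proof -
  have "mat_of d (mat_apply d M) = mat_of d (mat_apply d M')"
    using assms(3) unitv_vspace by (auto simp: mat_of_def fun_eq_iff)
  then show ?thesis using mat_of_mat_apply assms(1,2) by metis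
qed

lemma mat_of_GL:
  assumes "lin_on d f" "bij_betw f (vspace d) (vspace d)"
  shows "mat_of d f \<in> GL d"
proof -
  have "bij_betw (mat_apply d (mat_of d f)) (vspace d) (vspace d)"
    using assms(2) bij_betw_cong[of "vspace d" "mat_apply d (mat_of d f)" f] mat_of_apply[OF assms(1)] by blast
  then show ?thesis by (auto simp: GL_def mat_of_def)
qed

lemma GL_bij: "M \<in> GL d \<Longrightarrow> bij_betw (mat_apply d M) (vspace d) (vspace d)"
  by (simp add: GL_def)

lemma Einv_props:
  assumes "M \<in> GL d"
  shows "bij_betw (Einv d M) (vspace d) (vspace d)"
    and "\<And>x. x \<in> vspace d \<Longrightarrow> mat_apply d M (Einv d M x) = x"
    and "\<And>x. x \<in> vspace d \<Longrightarrow> Einv d M (mat_apply d M x) = x"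
    and "\<And>x. x \<in> vspace d \<Longrightarrow> Einv d M x \<in> vspace d"
proof -
  have b: "bij_betw (mat_apply d M) (vspace d) (vspace d)" using GL_bij[OF assms] .
  show "bij_betw (Einv d M) (vspace d) (vspace d)" unfolding Einv_def using bij_betw_inv_into[OF b] .
  show "\<And>x. x \<in> vspace d \<Longrightarrow> mat_apply d M (Einv d M x) = x"
    unfolding Einv_def using b by (simp add: bij_betw_def f_inv_into_f)
  show "\<And>x. x \<in> vspace d \<Longrightarrow> Einv d M (mat_apply d M x) = x"
    unfolding Einv_def using b by (simp add: bij_betw_def inv_into_f_f)
  show "\<And>x. x \<in> vspace d \<Longrightarrow> Einv d M x \<in> vspace d"
    using bij_betw_apply[OF bij_betw_inv_into[OF b]] unfolding Einv_def by blast
qed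

lemma lin_Einv:
  fixes M :: "nat \<Rightarrow> nat \<Rightarrow> 'f::field"
  assumes "M \<in> GL d" shows "lin_on d (Einv d M)"
  unfolding lin_on_def
proof (intro conjI ballI allI)
  fix x :: "nat \<Rightarrow> 'f" assume "x \<in> vspace d" then show "Einv d M x \<in> vspace d" using Einv_props(4)[OF assms] by blast
next
  fix x y :: "nat \<Rightarrow> 'f" and c assume x: "x \<in> vspace d" and y: "y \<in> vspace d"
  let ?X = "Einv d M x" and ?Y = "Einv d M y"
  have X: "?X \<in> vspace d" and Y: "?Y \<in> vspace d" using x y Einv_props(4)[OF assms] by auto
  have XY: "(\<lambda>i. ?X i + c * ?Y i) \<in> vspace d" using X Y by (simp add: vspace_def)
  have "mat_apply d M (\<lambda>i. ?X i + c * ?Y i) = (\<lambda>i. mat_apply d M ?X i + c * mat_apply d M ?Y i)"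
    using lin_mat_apply[of d M] X Y unfolding lin_on_def by blast
  also have "\<dots> = (\<lambda>i. x i + c * y i)" using x y Einv_props(2)[OF assms] by simp
  finally have "Einv d M (\<lambda>i. x i + c * y i) = Einv d M (mat_apply d M (\<lambda>i. ?X i + c * ?Y i))" by simp
  also have "\<dots> = (\<lambda>i. ?X i + c * ?Y i)" using Einv_props(3)[OF assms XY] .
  finally show "Einv d M (\<lambda>i. x i + c * y i) = (\<lambda>i. ?X i + c * ?Y i)" .
qed

lemma lin_comp:
  fixes f g :: "(nat \<Rightarrow> 'f::field) \<Rightarrow> (nat \<Rightarrow> 'f)"
  shows "lin_on d f \<Longrightarrow> lin_on d g \<Longrightarrow> lin_on d (f \<circ> g)"
proof -
  assume f: "lin_on d f" and g: "lin_on d g"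
  show ?thesis unfolding lin_on_def
  proof (intro conjI ballI allI)
    fix x :: "nat \<Rightarrow> 'f" assume "x \<in> vspace d" then show "(f \<circ> g) x \<in> vspace d" using f g lin_onV by (metis comp_apply)
  next
    fix x y :: "nat \<Rightarrow> 'f" and c assume x: "x \<in> vspace d" and y: "y \<in> vspace d"
    have "g (\<lambda>i. x i + c * y i) = (\<lambda>i. g x i + c * g y i)" using lin_onD[OF g x y] .
    then show "(f \<circ> g) (\<lambda>i. x i + c * y i) = (\<lambda>i. (f \<circ> g) x i + c * (f \<circ> g) y i)"
      using lin_onD[OF f lin_onV[OF g x] lin_onV[OF g y]] by simp
  qed
qed

lemma Einv_eq_iff:
  assumes "M \<in> GL d" "x \<in> vspace d" "y \<in> vspace d"
  shows "Einv d M x = y \<longleftrightarrow> mat_apply d M y = x"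
proof
  assume "Einv d M x = y" then show "mat_apply d M y = x" using Einv_props(2)[OF assms(1) assms(2)] by simp
next
  assume "mat_apply d M y = x" then show "Einv d M x = y" using Einv_props(3)[OF assms(1) assms(3)] by simp
qed

definition r1 :: "nat \<Rightarrow> (nat \<Rightarrow> 'f::field) \<Rightarrow> (nat \<Rightarrow> 'f) \<Rightarrow> (nat \<Rightarrow> 'f)" where
  "r1 k c x = (\<lambda>i. x i + x k * c i)"

lemma lin_r1: "c \<in> vspace d \<Longrightarrow> lin_on d (r1 k c)"
  unfolding lin_on_def r1_def vspace_def by (auto simp: fun_eq_iff algebra_simps)

lemma bij_r1:
  fixes c :: "nat \<Rightarrow> 'f::{finite,field}"
  assumes "c \<in> vspace d" "1 + c k \<noteq> 0"
  shows "bij_betw (r1 k c) (vspace d) (vspace d)"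
proof -
  have sub: "r1 k c ` vspace d \<subseteq> vspace d" using lin_onV[OF lin_r1[OF assms(1)]] by blast
  have inj: "inj_on (r1 k c) (vspace d)"
  proof (rule inj_onI)
    fix x y assume "r1 k c x = r1 k c y"
    then have e: "\<And>i. x i + x k * c i = y i + y k * c i" unfolding r1_def by metis
    have "(x k - y k) * (1 + c k) = 0" using e[of k] by (simp add: algebra_simps)
    then have "x k = y k" using assms(2) by simp
    then show "x = y" using e by (auto simp: fun_eq_iff)
  qed
  show ?thesis unfolding bij_betw_def using inj endo_inj_surj[OF finite_vspace sub inj] by simp
qed

lemma exists_map_to:
  fixes w :: "nat \<Rightarrow> 'f::{finite,field}"
  assumes "d \<ge> 1" "w \<in> vspace d" "w \<noteq> (\<lambda>_. 0)"
  shows "\<exists>f. lin_on d f \<and> bij_betw f (vspace d) (vspace d) \<and> f (unitv (d-1)) = w"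
proof (cases "w (d-1) = 0")
  case False
  let ?c = "\<lambda>i. w i - unitv (d-1) i"
  have u: "unitv (d-1) \<in> vspace d" using assms(1) by (intro unitv_vspace) simp
  have c: "?c \<in> vspace d" using assms(2) u by (simp add: vspace_def)
  have "1 + ?c (d-1) \<noteq> 0" using False by (simp add: unitv_def)
  moreover have "r1 (d-1) ?c (unitv (d-1)) = w" by (simp add: r1_def unitv_def fun_eq_iff)
  ultimately show ?thesis using lin_r1[OF c] bij_r1[OF c] by blast
next
  case True
  obtain k where k: "w k \<noteq> 0" using assms(3) by auto
  have kd: "k < d" using k assms(2) by (simp add: vspace_def) (meson not_le)
  have kne: "k \<noteq> d-1" using k True by auto
  have u: "unitv (d-1) \<in> vspace d" using assms(1) by (intro unitv_vspace) simp
  have b1: "bij_betw (r1 (d-1) w) (vspace d) (vspace d)" using bij_r1[OF assms(2)] True by simp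
  let ?c2 = "\<lambda>i. - (unitv (d-1) i / w k)"
  have c2: "?c2 \<in> vspace d" using u by (auto simp: vspace_def)
  have b2: "bij_betw (r1 k ?c2) (vspace d) (vspace d)" using bij_r1[OF c2] kne by (simp add: unitv_def)
  have l: "lin_on d (r1 k ?c2 \<circ> r1 (d-1) w)" using lin_comp lin_r1[OF c2] lin_r1[OF assms(2)] by blast
  have b: "bij_betw (r1 k ?c2 \<circ> r1 (d-1) w) (vspace d) (vspace d)" using bij_betw_trans[OF b1 b2] .
  have "(r1 k ?c2 \<circ> r1 (d-1) w) (unitv (d-1)) = w"
    using k kne by (simp add: r1_def unitv_def fun_eq_iff)
  then show ?thesis using l b by blast
qed

lemma finite_GL: "finite (GL d :: (nat \<Rightarrow> nat \<Rightarrow> 'f::{finite,field}) set)"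
proof -
  have "GL d \<subseteq> {M. \<forall>i. (i \<in> {..<d} \<longrightarrow> M i \<in> (vspace d :: (nat \<Rightarrow> 'f) set)) \<and> (i \<notin> {..<d} \<longrightarrow> M i = (\<lambda>_. 0))}"
    by (auto simp: GL_def vspace_def fun_eq_iff)
  moreover have "finite {M. \<forall>i. (i \<in> {..<d} \<longrightarrow> M i \<in> (vspace d :: (nat \<Rightarrow> 'f) set)) \<and> (i \<notin> {..<d} \<longrightarrow> M i = (\<lambda>_. 0))}"
    by (rule finite_set_of_finite_funs) (simp_all add: finite_vspace)
  ultimately show ?thesis by (rule finite_subset)
qed

lemma card_le_transfer:
  fixes f :: "(nat \<Rightarrow> 'f::{finite,field}) \<Rightarrow> (nat \<Rightarrow> 'f)"
  assumes "lin_on d f" "bij_betw f (vspace d) (vspace d)" "x \<in> vspace d" "f x = y"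
  shows "card {M\<in>GL d. mat_apply d M y = t} \<le> card {M\<in>GL d. mat_apply d M x = t}"
proof -
  let ?P = "\<lambda>M. mat_of d (mat_apply d M \<circ> f)"
  have linc: "lin_on d (mat_apply d M \<circ> f)" for M using lin_comp[OF lin_mat_apply assms(1)] .
  have PGL: "?P M \<in> GL d" if "M \<in> GL d" for M
    using mat_of_GL[OF linc bij_betw_trans[OF assms(2) GL_bij[OF that]]] .
  have Papp: "mat_apply d (?P M) z = mat_apply d M (f z)" if "z \<in> vspace d" for M z
    using mat_of_apply[OF linc that] by simp
  have inj: "inj_on ?P {M\<in>GL d. mat_apply d M y = t}"
  proof (rule inj_onI)
    fix M M' assume M: "M \<in> {M\<in>GL d. mat_apply d M y = t}" and M': "M' \<in> {M\<in>GL d. mat_apply d M y = t}"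
      and e: "?P M = ?P M'"
    show "M = M'"
    proof (rule GL_eqI)
      show "M \<in> GL d" "M' \<in> GL d" using M M' by auto
      fix z :: "nat \<Rightarrow> 'f" assume z: "z \<in> vspace d"
      then obtain z' where z': "z' \<in> vspace d" "z = f z'" using assms(2) by (metis bij_betw_iff_bijections)
      show "mat_apply d M z = mat_apply d M' z" using Papp[OF z'(1), of M] Papp[OF z'(1), of M'] e z' by simp
    qed
  qed
  have sub: "?P ` {M\<in>GL d. mat_apply d M y = t} \<subseteq> {M\<in>GL d. mat_apply d M x = t}"
    using PGL Papp[OF assms(3)] assms(4) by auto
  show ?thesis by (rule card_inj_on_le[OF inj sub]) (simp add: finite_GL)
qed

lemma card_fiber_const:
  fixes w :: "nat \<Rightarrow> 'f::{finite,field}"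
  assumes "d \<ge> 1" "w \<in> vspace d" "w \<noteq> (\<lambda>_. 0)"
  shows "card {M\<in>GL d. mat_apply d M w = unitv (d-1)} = card {M\<in>GL d. mat_apply d M (unitv (d-1)) = (unitv (d-1) :: nat \<Rightarrow> 'f)}"
proof -
  obtain f where f: "lin_on d f" "bij_betw f (vspace d) (vspace d)" "f (unitv (d-1)) = w"
    using exists_map_to[OF assms] by blast
  have u: "unitv (d-1) \<in> vspace d" using assms(1) by (intro unitv_vspace) simp
  have 1: "card {M\<in>GL d. mat_apply d M w = unitv (d-1)} \<le> card {M\<in>GL d. mat_apply d M (unitv (d-1)) = (unitv (d-1) :: nat \<Rightarrow> 'f)}"
    by (rule card_le_transfer[OF f(1,2) u f(3)])
  let ?N = "mat_of d f"
  have N: "?N \<in> GL d" using mat_of_GL[OF f(1,2)] .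
  have "mat_apply d ?N (unitv (d-1)) = w" using mat_of_apply[OF f(1) u] f(3) by simp
  then have "Einv d ?N w = unitv (d-1)" using Einv_eq_iff[OF N assms(2) u] by simp
  then have 2: "card {M\<in>GL d. mat_apply d M (unitv (d-1)) = (unitv (d-1) :: nat \<Rightarrow> 'f)} \<le> card {M\<in>GL d. mat_apply d M w = unitv (d-1)}"
    using card_le_transfer[OF lin_Einv[OF N] Einv_props(1)[OF N] assms(2)] by blast
  show ?thesis using 1 2 by simp
qed

lemma GL_sum:
  fixes H :: "(nat \<Rightarrow> 'f::{finite,field}) \<Rightarrow> real"
  assumes "d \<ge> 1"
  shows "(\<Sum>M\<in>GL d. H (Einv d M (unitv (d-1))))
     = real (card {M\<in>GL d. mat_apply d M (unitv (d-1)) = (unitv (d-1) :: nat \<Rightarrow> 'f)}) * (\<Sum>w\<in>vspace d - {\<lambda>_. 0}. H w)"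
proof -
  let ?e = "unitv (d-1) :: nat \<Rightarrow> 'f"
  let ?V0 = "vspace d - {\<lambda>_. 0} :: (nat \<Rightarrow> 'f) set"
  have u: "?e \<in> vspace d" using assms(1) by (intro unitv_vspace) simp
  have ne: "?e \<noteq> (\<lambda>_. 0)" by (simp add: unitv_def fun_eq_iff)
  have img: "(\<lambda>M. Einv d M ?e) ` GL d \<subseteq> ?V0"
  proof
    fix w assume "w \<in> (\<lambda>M. Einv d M ?e) ` GL d"
    then obtain M where M: "M \<in> GL d" "w = Einv d M ?e" by blast
    have wv: "w \<in> vspace d" using Einv_props(4)[OF M(1) u] M(2) by simp
    have "w \<noteq> (\<lambda>_. 0)"
    proof
      assume "w = (\<lambda>_. 0)"
      then have "mat_apply d M (\<lambda>_. 0) = ?e" using Einv_eq_iff[OF M(1) u zero_vspace] M(2) by simp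
      then show False using lin_zero[OF lin_mat_apply] ne by metis
    qed
    then show "w \<in> ?V0" using wv by simp
  qed
  have "(\<Sum>M\<in>GL d. H (Einv d M ?e)) = (\<Sum>w\<in>?V0. \<Sum>M\<in>{M\<in>GL d. Einv d M ?e = w}. H (Einv d M ?e))"
    by (rule sum.group[symmetric, OF finite_GL _ img]) (simp add: finite_vspace)
  also have "\<dots> = (\<Sum>w\<in>?V0. real (card {M\<in>GL d. mat_apply d M ?e = ?e}) * H w)"
  proof (rule sum.cong[OF refl])
    fix w assume w: "w \<in> ?V0"
    have eqs: "{M\<in>GL d. Einv d M ?e = w} = {M\<in>GL d. mat_apply d M w = ?e}"
      using Einv_eq_iff[OF _ u] w by auto
    have "(\<Sum>M\<in>{M\<in>GL d. Einv d M ?e = w}. H (Einv d M ?e)) = (\<Sum>M\<in>{M\<in>GL d. Einv d M ?e = w}. H w)"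
      by simp
    also have "\<dots> = real (card {M\<in>GL d. mat_apply d M w = ?e}) * H w" using eqs by simp
    also have "\<dots> = real (card {M\<in>GL d. mat_apply d M ?e = ?e}) * H w"
      using card_fiber_const[OF assms, of w] w by simp
    finally show "(\<Sum>M\<in>{M\<in>GL d. Einv d M ?e = w}. H (Einv d M ?e)) = real (card {M\<in>GL d. mat_apply d M ?e = ?e}) * H w" .
  qed
  also have "\<dots> = real (card {M\<in>GL d. mat_apply d M ?e = ?e}) * (\<Sum>w\<in>?V0. H w)"
    by (simp add: sum_distrib_left)
  finally show ?thesis .
qed

lemma card_ge2: "card (UNIV::'f::{finite,field} set) \<ge> 2"
proof -
  have "card {0::'f, 1} = 2" by simp
  moreover have "card {0::'f, 1} \<le> card (UNIV::'f set)" by (rule card_mono) simp_all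
  ultimately show ?thesis by simp
qed

lemma line_sub:
  assumes "u \<in> vspace d" "w \<in> vspace d"
  shows "line_through u w \<subseteq> vspace d"
  using assms by (auto simp: line_through_def vspace_def)

lemma line_mem: "(\<lambda>i. u i + t * w i) \<in> line_through u w"
  by (auto simp: line_through_def)

lemma line_self: "u \<in> line_through u w"
proof -
  have "u = (\<lambda>i. u i + 0 * w i)" by simp
  then show ?thesis using line_mem by metis
qed

lemma line_shift:
  assumes "z \<in> line_through u w"
  shows "line_through z w = line_through u w"
proof -
  obtain t0 where z: "z = (\<lambda>i. u i + t0 * w i)" using assms by (auto simp: line_through_def)
  show ?thesis
  proof
    show "line_through z w \<subseteq> line_through u w"
    proof
      fix x assume "x \<in> line_through z w"
      then obtain t where "x = (\<lambda>i. z i + t * w i)" by (auto simp: line_through_def)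
      then have "x = (\<lambda>i. u i + (t0 + t) * w i)" using z by (simp add: algebra_simps)
      then show "x \<in> line_through u w" using line_mem by metis
    qed
    show "line_through u w \<subseteq> line_through z w"
    proof
      fix x assume "x \<in> line_through u w"
      then obtain t where "x = (\<lambda>i. u i + t * w i)" by (auto simp: line_through_def)
      then have "x = (\<lambda>i. z i + (t - t0) * w i)" using z by (simp add: algebra_simps)
      then show "x \<in> line_through z w" using line_mem by metis
    qed
  qed
qed

lemma lines_through_point:
  assumes "l \<in> lines d" "z \<in> l"
  shows "\<exists>w. w \<in> vspace d \<and> w \<noteq> (\<lambda>_. 0) \<and> l = line_through z w"
proof -
  obtain u w where "u \<in> vspace d" "w \<in> vspace d" "w \<noteq> (\<lambda>_. 0)" "l = line_through u w"
    using assms(1) by (auto simp: lines_def)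
  then show ?thesis using line_shift assms(2) by metis
qed

lemma line_in_lines:
  "z \<in> vspace d \<Longrightarrow> w \<in> vspace d \<Longrightarrow> w \<noteq> (\<lambda>_. 0) \<Longrightarrow> line_through z w \<in> lines d"
  by (auto simp: lines_def)

lemma line_scale:
  fixes w :: "nat \<Rightarrow> 'f::field"
  assumes "s \<noteq> 0"
  shows "line_through z (\<lambda>i. s * w i) = line_through z w"
proof
  show "line_through z (\<lambda>i. s * w i) \<subseteq> line_through z w"
  proof
    fix x assume "x \<in> line_through z (\<lambda>i. s * w i)"
    then obtain t where "x = (\<lambda>i. z i + t * (s * w i))" by (auto simp: line_through_def)
    then have "x = (\<lambda>i. z i + (t * s) * w i)" by (simp add: mult.assoc)
    then show "x \<in> line_through z w" using line_mem by metis
  qed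
  show "line_through z w \<subseteq> line_through z (\<lambda>i. s * w i)"
  proof
    fix x assume "x \<in> line_through z w"
    then obtain t where "x = (\<lambda>i. z i + t * w i)" by (auto simp: line_through_def)
    then have "x = (\<lambda>i. z i + (t / s) * (s * w i))" using assms by simp
    then show "x \<in> line_through z (\<lambda>i. s * w i)" using line_mem by metis
  qed
qed

lemma line_fiber:
  fixes w :: "nat \<Rightarrow> 'f::{finite,field}"
  assumes "z \<in> vspace d" "w \<in> vspace d" "w \<noteq> (\<lambda>_. 0)"
  shows "card {w'\<in>vspace d - {\<lambda>_. 0}. line_through z w' = line_through z w} = card (UNIV::'f set) - 1"
proof -
  have eq: "{w'\<in>vspace d - {\<lambda>_. 0}. line_through z w' = line_through z w} = (\<lambda>s. \<lambda>i. s * w i) ` (UNIV - {0})"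
  proof
    show "{w'\<in>vspace d - {\<lambda>_. 0}. line_through z w' = line_through z w} \<subseteq> (\<lambda>s. \<lambda>i. s * w i) ` (UNIV - {0})"
    proof
      fix w' assume w': "w' \<in> {w'\<in>vspace d - {\<lambda>_. 0}. line_through z w' = line_through z w}"
      have "(\<lambda>i. z i + 1 * w' i) \<in> line_through z w" using w' line_mem[of z 1 w'] by auto
      then obtain t where "(\<lambda>i. z i + 1 * w' i) = (\<lambda>i. z i + t * w i)" by (auto simp: line_through_def)
      then have wt: "w' = (\<lambda>i. t * w i)" by (simp add: fun_eq_iff)
      then have "t \<noteq> 0" using w' by auto
      then show "w' \<in> (\<lambda>s. \<lambda>i. s * w i) ` (UNIV - {0})" using wt by blast
    qed
    show "(\<lambda>s. \<lambda>i. s * w i) ` (UNIV - {0}) \<subseteq> {w'\<in>vspace d - {\<lambda>_. 0}. line_through z w' = line_through z w}"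
    proof
      fix x assume "x \<in> (\<lambda>s. \<lambda>i. s * w i) ` (UNIV - {0})"
      then obtain s where s: "s \<noteq> 0" "x = (\<lambda>i. s * w i)" by blast
      have "x \<in> vspace d" using s assms(2) by (simp add: vspace_def)
      moreover have "x \<noteq> (\<lambda>_. 0)" using s assms(3) by (auto simp: fun_eq_iff)
      moreover have "line_through z x = line_through z w" using line_scale[OF s(1)] s(2) by simp
      ultimately show "x \<in> {w'\<in>vspace d - {\<lambda>_. 0}. line_through z w' = line_through z w}" by simp
    qed
  qed
  obtain k where k: "w k \<noteq> 0" using assms(3) by auto
  have inj: "inj_on (\<lambda>s. \<lambda>i. s * w i) (UNIV - {0})"
  proof (rule inj_onI)
    fix s s' assume "(\<lambda>i. s * w i) = (\<lambda>i. s' * w i)"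
    then have "s * w k = s' * w k" by metis
    then show "s = s'" using k by simp
  qed
  show ?thesis unfolding eq card_image[OF inj] by (simp add: card_Diff_singleton)
qed

lemma finite_lines: "finite (lines d :: (nat \<Rightarrow> 'f::{finite,field}) set set)"
proof -
  have "lines d \<subseteq> Pow (vspace d :: (nat \<Rightarrow> 'f) set)" using line_sub by (auto simp: lines_def)
  then show ?thesis using finite_vspace by (metis finite_Pow_iff finite_subset)
qed

lemma sum_dirs:
  fixes h :: "(nat \<Rightarrow> 'f::{finite,field}) set \<Rightarrow> real"
  assumes z: "z \<in> vspace d"
  shows "(\<Sum>w\<in>vspace d - {\<lambda>_. 0}. h (line_through z w))
       = (real (card (UNIV::'f set)) - 1) * (\<Sum>l\<in>{l\<in>lines d. z \<in> l}. h l)"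
proof -
  let ?V0 = "vspace d - {\<lambda>_. 0} :: (nat \<Rightarrow> 'f) set"
  have img: "line_through z ` ?V0 = {l\<in>lines d. z \<in> l}"
  proof
    show "line_through z ` ?V0 \<subseteq> {l\<in>lines d. z \<in> l}"
      using line_in_lines[OF z] line_self by auto
    show "{l\<in>lines d. z \<in> l} \<subseteq> line_through z ` ?V0"
      using lines_through_point by fastforce
  qed
  have "(\<Sum>w\<in>?V0. h (line_through z w)) = (\<Sum>l\<in>line_through z ` ?V0. \<Sum>w\<in>{w\<in>?V0. line_through z w = l}. h (line_through z w))"
    by (rule sum.image_gen) (simp add: finite_vspace)
  also have "\<dots> = (\<Sum>l\<in>line_through z ` ?V0. (real (card (UNIV::'f set)) - 1) * h l)"
  proof (rule sum.cong[OF refl])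
    fix l assume "l \<in> line_through z ` ?V0"
    then obtain w where w: "w \<in> ?V0" "l = line_through z w" by blast
    have c: "card {w'\<in>?V0. line_through z w' = l} = card (UNIV::'f set) - 1"
      using line_fiber[OF z, of w] w by simp
    have cq: "card (UNIV::'f set) \<ge> 1" using card_ge2[where 'f='f] by simp
    have "(\<Sum>w\<in>{w\<in>?V0. line_through z w = l}. h (line_through z w)) = (\<Sum>w\<in>{w\<in>?V0. line_through z w = l}. h l)"
      by simp
    also have "\<dots> = (real (card (UNIV::'f set)) - 1) * h l" using c cq by (simp add: of_nat_diff)
    finally show "(\<Sum>w\<in>{w\<in>?V0. line_through z w = l}. h (line_through z w)) = (real (card (UNIV::'f set)) - 1) * h l" .
  qed
  finally show ?thesis using img by (simp add: sum_distrib_left)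
qed

lemma card_line:
  fixes w :: "nat \<Rightarrow> 'f::{finite,field}"
  assumes "w \<noteq> (\<lambda>_. 0)"
  shows "card (line_through u w) = card (UNIV::'f set)"
proof -
  obtain k where k: "w k \<noteq> 0" using assms by auto
  have eq: "line_through u w = (\<lambda>t. \<lambda>i. u i + t * w i) ` UNIV" by (auto simp: line_through_def)
  have "inj (\<lambda>t. \<lambda>i. u i + t * w i)"
  proof (rule injI)
    fix s s' assume "(\<lambda>i. u i + s * w i) = (\<lambda>i. u i + s' * w i)"
    then have "u k + s * w k = u k + s' * w k" by metis
    then show "s = s'" using k by simp
  qed
  then show ?thesis unfolding eq by (simp add: card_image)
qed

lemma card_lines_through:
  fixes z :: "nat \<Rightarrow> 'f::{finite,field}"
  assumes "z \<in> vspace d"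
  shows "(real (card (UNIV::'f set)) - 1) * real (card {l\<in>lines d. z \<in> l}) = real (card (UNIV::'f set)) ^ d - 1"
proof -
  have "(\<Sum>w\<in>vspace d - {\<lambda>_. 0}. (\<lambda>_. 1::real) (line_through z w)) = (real (card (UNIV::'f set)) - 1) * (\<Sum>l\<in>{l\<in>lines d. z \<in> l}. 1)"
    by (rule sum_dirs[OF assms])
  moreover have "card (vspace d - {\<lambda>_. 0} :: (nat \<Rightarrow> 'f) set) = card (UNIV::'f set) ^ d - 1"
    using card_vspace[where 'f='f and d=d] zero_vspace[where d=d] card_Diff_singleton[OF zero_vspace[where d=d]]
    by (metis One_nat_def)
  moreover have "card (UNIV::'f set) ^ d \<ge> 1" using card_ge2[where 'f='f] by simp
  ultimately show ?thesis by (simp add: of_nat_diff)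
qed

definition Yv :: "((nat \<Rightarrow> 'f) \<Rightarrow> 'f \<Rightarrow> complex) \<Rightarrow> ((nat \<Rightarrow> 'f) set \<Rightarrow> (nat \<Rightarrow> 'f) \<Rightarrow> 'f) \<Rightarrow> (nat \<Rightarrow> 'f::field) \<Rightarrow> (nat \<Rightarrow> 'f) \<Rightarrow> complex" where
  "Yv \<phi> g z w = \<phi> z (g (line_through z w) z)"

lemma bt_lin:
  fixes b :: "nat \<Rightarrow> 'f::field"
  assumes "d \<ge> 1" "b \<in> vspace (d-1)"
  shows "bt d b s = (\<lambda>i. bt d b 0 i + s * unitv (d-1) i)" and "bt d b s \<in> vspace d"
proof -
  have b0: "b (d-1) = 0" using assms(2) by (simp add: vspace_def)
  show "bt d b s = (\<lambda>i. bt d b 0 i + s * unitv (d-1) i)"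
    using b0 by (auto simp: bt_def unitv_def fun_eq_iff)
  show "bt d b s \<in> vspace d" using assms by (auto simp: bt_def vspace_def)
qed

lemma zt_eq:
  fixes M :: "nat \<Rightarrow> nat \<Rightarrow> 'f::field"
  assumes "d \<ge> 1" "M \<in> GL d" "b \<in> vspace (d-1)"
  shows "Einv d M (bt d b s) = (\<lambda>i. line_u d M b i + s * Einv d M (unitv (d-1)) i)"
proof -
  have u: "unitv (d-1) \<in> (vspace d :: (nat \<Rightarrow> 'f) set)" using assms(1) by (intro unitv_vspace) simp
  have "Einv d M (bt d b s) = Einv d M (\<lambda>i. bt d b 0 i + s * unitv (d-1) i)"
    using bt_lin(1)[OF assms(1,3)] by metis
  also have "\<dots> = (\<lambda>i. Einv d M (bt d b 0) i + s * Einv d M (unitv (d-1)) i)"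
    using lin_onD[OF lin_Einv[OF assms(2)] bt_lin(2)[OF assms(1,3)] u] .
  finally show ?thesis by (simp add: line_u_def)
qed

lemma vminusu:
  fixes M :: "nat \<Rightarrow> nat \<Rightarrow> 'f::field"
  assumes "d \<ge> 1" "M \<in> GL d" "b \<in> vspace (d-1)"
  shows "(\<lambda>i. line_v d M b i - line_u d M b i) = Einv d M (unitv (d-1))"
proof -
  have "line_v d M b = (\<lambda>i. line_u d M b i + 1 * Einv d M (unitv (d-1)) i)"
    unfolding line_v_def by (rule zt_eq[OF assms])
  then show ?thesis by (simp add: fun_eq_iff)
qed

lemma bij_bt:
  assumes "d \<ge> 1"
  shows "bij_betw (\<lambda>(b,s). bt d b s) (vspace (d-1) \<times> (UNIV::'f::zero set)) (vspace d)"
  unfolding bij_betw_def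
proof
  show "inj_on (\<lambda>(b,s). bt d b s) (vspace (d-1) \<times> (UNIV::'f set))"
  proof (rule inj_onI)
    fix p p' assume p: "p \<in> vspace (d-1) \<times> (UNIV::'f set)" and p': "p' \<in> vspace (d-1) \<times> (UNIV::'f set)"
      and e0: "(\<lambda>(b,s). bt d b s) p = (\<lambda>(b,s). bt d b s) p'"
    obtain x c x' c' where pp: "p = (x,c)" "p' = (x',c')" by (cases p, cases p')
    have x: "x \<in> vspace (d-1)" and x': "x' \<in> vspace (d-1)" and e: "bt d x c = bt d x' c'"
      using p p' e0 pp by auto
    have "c = c'" using fun_cong[OF e, of "d-1"] by (simp add: bt_def)
    moreover have "x i = x' i" for i
      using fun_cong[OF e, of i] x x' by (cases "i = d-1") (auto simp: vspace_def bt_def)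
    ultimately show "p = p'" using pp by auto
  qed
  show "(\<lambda>(b,s). bt d b s) ` (vspace (d-1) \<times> (UNIV::'f set)) = vspace d"
  proof
    show "(\<lambda>(b,s). bt d b s) ` (vspace (d-1) \<times> (UNIV::'f set)) \<subseteq> vspace d"
      using assms by (auto simp: vspace_def bt_def)
    show "vspace d \<subseteq> (\<lambda>(b,s). bt d b s) ` (vspace (d-1) \<times> (UNIV::'f set))"
    proof
      fix y :: "nat \<Rightarrow> 'f" assume y: "y \<in> vspace d"
      have "y = (\<lambda>(b,s). bt d b s) (y(d-1:=0), y (d-1))" by (auto simp: bt_def)
      moreover have "(y(d-1:=0), y (d-1)) \<in> vspace (d-1) \<times> UNIV" using y assms
        by (auto simp: vspace_def)
      ultimately show "y \<in> (\<lambda>(b,s). bt d b s) ` (vspace (d-1) \<times> (UNIV::'f set))" by blast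
    qed
  qed
qed

lemma amp_sq: "(amp_norm \<phi> z)\<^sup>2 = (\<Sum>y\<in>UNIV. (cmod (\<phi> z y))\<^sup>2)"
  unfolding amp_norm_def by (simp add: sum_nonneg)

lemma macc:
  fixes \<phi> :: "(nat \<Rightarrow> 'f::{finite,field}) \<Rightarrow> 'f \<Rightarrow> complex" and M :: "nat \<Rightarrow> nat \<Rightarrow> 'f"
  assumes d: "d \<ge> 1" and M: "M \<in> GL d" and b: "b \<in> vspace (d-1)"
    and pos: "\<forall>z\<in>vspace d. amp_norm \<phi> z > 0"
  shows "meas_prob d \<phi> M b * accept_prob d \<phi> g M b
       = (cmod (\<Sum>t\<in>UNIV. Yv \<phi> g (Einv d M (bt d b t)) (Einv d M (unitv (d-1)))))\<^sup>2 / real (card (UNIV::'f set))"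
proof -
  let ?w = "Einv d M (unitv (d-1))"
  let ?u = "line_u d M b"
  let ?z = "\<lambda>t. Einv d M (bt d b t)"
  let ?p = "meas_prob d \<phi> M b"
  let ?q = "real (card (UNIV::'f set))"
  let ?S = "\<Sum>t\<in>UNIV. Yv \<phi> g (?z t) ?w"
  have zt: "?z t = (\<lambda>i. ?u i + t * ?w i)" for t using zt_eq[OF d M b] .
  have zV: "?z t \<in> vspace d" for t using Einv_props(4)[OF M bt_lin(2)[OF d b]] .
  have vi: "\<And>i. line_v d M b i - ?u i = ?w i" using vminusu[OF d M b] by metis
  have ml: "measured_line d M b = line_through ?u ?w" unfolding measured_line_def using vminusu[OF d M b] by simp
  have pt: "(\<lambda>i. ?u i + (line_v d M b i - ?u i) * t) = ?z t" for t
    using zt[of t] by (simp add: vi mult.commute)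
  have lz: "line_through ?u ?w = line_through (?z t) ?w" for t
    using line_shift[of "?z t" ?u ?w] zt[of t] line_mem by metis
  have G: "g (measured_line d M b) (\<lambda>i. ?u i + (line_v d M b i - ?u i) * t) = g (line_through (?z t) ?w) (?z t)" for t
    using ml pt lz by simp
  have inner: "(\<Sum>y\<in>UNIV. cnj (e1 d g M b t y) * collapsed d \<phi> M b t y)
      = complex_of_real (1 / sqrt ?q) * (Yv \<phi> g (?z t) ?w / complex_of_real (sqrt ?p))" for t
  proof -
    have "(\<Sum>y\<in>UNIV. cnj (e1 d g M b t y) * collapsed d \<phi> M b t y)
       = (\<Sum>y\<in>UNIV. if y = g (line_through (?z t) ?w) (?z t) then complex_of_real (1 / sqrt ?q) * collapsed d \<phi> M b t y else 0)"
      by (rule sum.cong) (auto simp: e1_def G)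
    also have "\<dots> = complex_of_real (1 / sqrt ?q) * collapsed d \<phi> M b t (g (line_through (?z t) ?w) (?z t))"
      by (simp add: sum.delta)
    also have "\<dots> = complex_of_real (1 / sqrt ?q) * (Yv \<phi> g (?z t) ?w / complex_of_real (sqrt ?p))"
      by (simp add: collapsed_def Yv_def)
    finally show ?thesis .
  qed
  have q0: "?q > 0" using card_ge2[where 'f='f] by simp
  have "(\<Sum>y\<in>UNIV. (cmod (\<phi> (?z 0) y))\<^sup>2) > 0" using pos zV[of 0] amp_sq[of \<phi> "?z 0"]
    by (metis zero_less_power2 less_irrefl)
  moreover have "(\<Sum>y\<in>UNIV. (cmod (\<phi> (?z 0) y))\<^sup>2) \<le> ?p"
    unfolding meas_prob_def
    by (rule member_le_sum[where f="\<lambda>s. \<Sum>y\<in>UNIV. (cmod (\<phi> (?z s) y))\<^sup>2"]) (simp_all add: sum_nonneg)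
  ultimately have p0: "?p > 0" by linarith
  have sumeq: "(\<Sum>t\<in>UNIV. complex_of_real (1 / sqrt ?q) * (Yv \<phi> g (?z t) ?w / complex_of_real (sqrt ?p)))
       = complex_of_real (1 / sqrt ?q) * ?S / complex_of_real (sqrt ?p)"
    by (simp add: sum_distrib_left sum_divide_distrib)
  have "accept_prob d \<phi> g M b = (cmod (complex_of_real (1 / sqrt ?q) * ?S / complex_of_real (sqrt ?p)))\<^sup>2"
    unfolding accept_prob_def inner sumeq ..
  also have "\<dots> = (cmod ?S)\<^sup>2 / (?q * ?p)"
    using q0 p0 by (simp add: norm_mult norm_divide power_divide power_mult_distrib real_sqrt_mult[symmetric])
  finally have "accept_prob d \<phi> g M b = (cmod ?S)\<^sup>2 / (?q * ?p)" .
  then show ?thesis using p0 by simp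
qed


lemma cmod_sq_Re: "(cmod S)\<^sup>2 = Re (S * cnj S)"
  using complex_norm_square[of S] by (metis Re_complex_of_real)

lemma sum_shift_field: "(\<Sum>t'\<in>UNIV. F t') = (\<Sum>s\<in>UNIV. F ((t::'f::{finite,field}) + s))"
  by (rule sum.reindex_bij_witness[of _ "\<lambda>s. t + s" "\<lambda>t'. t' - t"]) auto

lemma sumb:
  fixes \<phi> :: "(nat \<Rightarrow> 'f::{finite,field}) \<Rightarrow> 'f \<Rightarrow> complex" and M :: "nat \<Rightarrow> nat \<Rightarrow> 'f"
  assumes d: "d \<ge> 1" and M: "M \<in> GL d"
  shows "(\<Sum>b\<in>vspace (d-1). (cmod (\<Sum>t\<in>UNIV. Yv \<phi> g (Einv d M (bt d b t)) (Einv d M (unitv (d-1)))))\<^sup>2)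
     = Re (\<Sum>z\<in>vspace d. \<Sum>s\<in>UNIV. Yv \<phi> g z (Einv d M (unitv (d-1)))
              * cnj (Yv \<phi> g (\<lambda>i. z i + s * Einv d M (unitv (d-1)) i) (Einv d M (unitv (d-1)))))"
proof -
  let ?w = "Einv d M (unitv (d-1))"
  let ?z = "\<lambda>b t. Einv d M (bt d b t)"
  let ?Y = "\<lambda>z. Yv \<phi> g z ?w"
  let ?F = "\<lambda>z. \<Sum>s\<in>UNIV. ?Y z * cnj (?Y (\<lambda>i. z i + s * ?w i))"
  have per_b: "(\<Sum>t\<in>UNIV. ?Y (?z b t)) * cnj (\<Sum>t\<in>UNIV. ?Y (?z b t)) = (\<Sum>t\<in>UNIV. ?F (?z b t))"
    if b: "b \<in> vspace (d-1)" for b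
  proof -
    have shift: "?z b (t + s) = (\<lambda>i. ?z b t i + s * ?w i)" for t s
      using zt_eq[OF d M b] by (simp add: algebra_simps)
    have "(\<Sum>t\<in>UNIV. ?Y (?z b t)) * cnj (\<Sum>t\<in>UNIV. ?Y (?z b t))
        = (\<Sum>t\<in>UNIV. ?Y (?z b t) * (\<Sum>t'\<in>UNIV. cnj (?Y (?z b t'))))"
      by (simp add: sum_distrib_right)
    also have "\<dots> = (\<Sum>t\<in>UNIV. ?Y (?z b t) * (\<Sum>s\<in>UNIV. cnj (?Y (?z b (t + s)))))"
    proof (rule sum.cong[OF refl])
      fix t
      show "?Y (?z b t) * (\<Sum>t'\<in>UNIV. cnj (?Y (?z b t'))) = ?Y (?z b t) * (\<Sum>s\<in>UNIV. cnj (?Y (?z b (t + s))))"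
        using sum_shift_field[of "\<lambda>t'. cnj (?Y (?z b t'))" t] by simp
    qed
    also have "\<dots> = (\<Sum>t\<in>UNIV. ?F (?z b t))"
      by (simp add: shift sum_distrib_left)
    finally show ?thesis .
  qed
  have bij: "bij_betw (\<lambda>(b,t). Einv d M (bt d b t)) (vspace (d-1) \<times> (UNIV::'f set)) (vspace d)"
  proof -
    have "bij_betw (Einv d M \<circ> (\<lambda>(b,t). bt d b t)) (vspace (d-1) \<times> (UNIV::'f set)) (vspace d)"
      using bij_betw_trans[OF bij_bt[OF d] Einv_props(1)[OF M]] .
    moreover have "(Einv d M \<circ> (\<lambda>(b,t). bt d b t)) = (\<lambda>(b,t). Einv d M (bt d b t))" by auto
    ultimately show ?thesis by simp
  qed
  have "(\<Sum>b\<in>vspace (d-1). (cmod (\<Sum>t\<in>UNIV. ?Y (?z b t)))\<^sup>2)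
      = Re (\<Sum>b\<in>vspace (d-1). (\<Sum>t\<in>UNIV. ?Y (?z b t)) * cnj (\<Sum>t\<in>UNIV. ?Y (?z b t)))"
  proof -
    have "(\<Sum>b\<in>vspace (d-1). (cmod (\<Sum>t\<in>UNIV. ?Y (?z b t)))\<^sup>2)
        = (\<Sum>b\<in>vspace (d-1). Re ((\<Sum>t\<in>UNIV. ?Y (?z b t)) * cnj (\<Sum>t\<in>UNIV. ?Y (?z b t))))"
      by (rule sum.cong[OF refl], rule cmod_sq_Re)
    then show ?thesis by (simp only: Re_sum)
  qed
  also have "\<dots> = Re (\<Sum>b\<in>vspace (d-1). \<Sum>t\<in>UNIV. ?F (?z b t))"
    using per_b by (metis (no_types, lifting) sum.cong)
  also have "(\<Sum>b\<in>vspace (d-1). \<Sum>t\<in>UNIV. ?F (?z b t)) = (\<Sum>(b,t)\<in>vspace (d-1) \<times> UNIV. ?F (?z b t))"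
    by (rule sum.cartesian_product)
  also have "\<dots> = (\<Sum>z\<in>vspace d. ?F z)"
    using sum.reindex_bij_betw[OF bij, of ?F] by (simp add: case_prod_beta')
  finally show ?thesis .
qed

definition Ow :: "((nat \<Rightarrow> 'f) \<Rightarrow> 'f \<Rightarrow> complex) \<Rightarrow> ((nat \<Rightarrow> 'f) set \<Rightarrow> (nat \<Rightarrow> 'f) \<Rightarrow> 'f) \<Rightarrow> nat \<Rightarrow> (nat \<Rightarrow> 'f::{finite,field}) \<Rightarrow> complex" where
  "Ow \<phi> g d w = (\<Sum>z\<in>vspace d. \<Sum>s\<in>UNIV - {0}. Yv \<phi> g z w * cnj (Yv \<phi> g (\<lambda>i. z i + s * w i) w))"

definition Dw :: "((nat \<Rightarrow> 'f) \<Rightarrow> 'f \<Rightarrow> complex) \<Rightarrow> ((nat \<Rightarrow> 'f) set \<Rightarrow> (nat \<Rightarrow> 'f) \<Rightarrow> 'f) \<Rightarrow> nat \<Rightarrow> (nat \<Rightarrow> 'f::{finite,field}) \<Rightarrow> real" where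
  "Dw \<phi> g d w = (\<Sum>z\<in>vspace d. (cmod (Yv \<phi> g z w))\<^sup>2)"

lemma K_split:
  fixes \<phi> :: "(nat \<Rightarrow> 'f::{finite,field}) \<Rightarrow> 'f \<Rightarrow> complex"
  shows "Re (\<Sum>z\<in>vspace d. \<Sum>s\<in>UNIV. Yv \<phi> g z w * cnj (Yv \<phi> g (\<lambda>i. z i + s * w i) w))
     = Dw \<phi> g d w + Re (Ow \<phi> g d w)"
proof -
  have e: "(\<Sum>s\<in>UNIV. Yv \<phi> g z w * cnj (Yv \<phi> g (\<lambda>i. z i + s * w i) w))
      = Yv \<phi> g z w * cnj (Yv \<phi> g z w) + (\<Sum>s\<in>UNIV - {0}. Yv \<phi> g z w * cnj (Yv \<phi> g (\<lambda>i. z i + s * w i) w))" for z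
    using sum.remove[of "UNIV::'f set" 0 "\<lambda>s. Yv \<phi> g z w * cnj (Yv \<phi> g (\<lambda>i. z i + s * w i) w)"] by simp
  have "(\<Sum>z\<in>vspace d. \<Sum>s\<in>UNIV. Yv \<phi> g z w * cnj (Yv \<phi> g (\<lambda>i. z i + s * w i) w))
      = (\<Sum>z\<in>vspace d. Yv \<phi> g z w * cnj (Yv \<phi> g z w)) + Ow \<phi> g d w"
    unfolding e Ow_def by (simp add: sum.distrib)
  then show ?thesis by (simp add: Dw_def cmod_sq_Re)
qed

lemma D_le:
  fixes \<phi> :: "(nat \<Rightarrow> 'f::{finite,field}) \<Rightarrow> 'f \<Rightarrow> complex"
  assumes norm: "(\<Sum>z\<in>vspace d. \<Sum>y\<in>UNIV. (cmod (\<phi> z y))\<^sup>2) = 1"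
  shows "Dw \<phi> g d w \<le> 1"
proof -
  have "Dw \<phi> g d w \<le> (\<Sum>z\<in>vspace d. \<Sum>y\<in>UNIV. (cmod (\<phi> z y))\<^sup>2)"
    unfolding Dw_def Yv_def
    by (rule sum_mono, rule member_le_sum) simp_all
  then show ?thesis using norm by simp
qed

lemma card_V0:
  "real (card (vspace d - {\<lambda>_. 0} :: (nat \<Rightarrow> 'f::{finite,field}) set)) = real (card (UNIV::'f set)) ^ d - 1"
proof -
  have "card (vspace d - {\<lambda>_. 0} :: (nat \<Rightarrow> 'f) set) = card (UNIV::'f set) ^ d - 1"
    using card_vspace[where 'f='f and d=d] card_Diff_singleton[OF zero_vspace[where d=d]]
    by (metis One_nat_def)
  moreover have "card (UNIV::'f set) ^ d \<ge> 1" using card_ge2[where 'f='f] by simp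
  ultimately show ?thesis by (simp add: of_nat_diff)
qed

lemma aux_frac:
  fixes G ne Q C :: real
  assumes "G = ne * Q" "ne > 0" "Q > 0"
  shows "(G + ne * C) / G = 1 + C / Q"
  using assms by (simp add: field_simps)

lemma gamma_bound:
  fixes \<phi> :: "(nat \<Rightarrow> 'f::{finite,field}) \<Rightarrow> 'f \<Rightarrow> complex"
  assumes d: "d \<ge> 1"
    and norm: "(\<Sum>z\<in>vspace d. \<Sum>y\<in>UNIV. (cmod (\<phi> z y))\<^sup>2) = 1"
    and pos: "\<forall>z\<in>vspace d. amp_norm \<phi> z > 0"
    and gam: "V_QLDT d \<phi> g \<ge> 1 / real (card (UNIV :: 'f set))"
  shows "real (card (UNIV :: 'f set)) * V_QLDT d \<phi> g - 1
     \<le> cmod (\<Sum>w\<in>vspace d - {\<lambda>_. 0}. Ow \<phi> g d w) / (real (card (UNIV :: 'f set)) ^ d - 1)"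
proof -
  let ?q = "real (card (UNIV :: 'f set))"
  let ?G = "GL d :: (nat \<Rightarrow> nat \<Rightarrow> 'f) set"
  let ?e = "unitv (d-1) :: nat \<Rightarrow> 'f"
  let ?ne = "real (card {M\<in>?G. mat_apply d M ?e = ?e})"
  let ?V0 = "vspace d - {\<lambda>_. 0} :: (nat \<Rightarrow> 'f) set"
  let ?C = "cmod (\<Sum>w\<in>?V0. Ow \<phi> g d w)"
  have q2: "?q \<ge> 2" using card_ge2[where 'f='f] by simp
  have X: "(\<Sum>M\<in>?G. \<Sum>b\<in>vspace (d-1). meas_prob d \<phi> M b * accept_prob d \<phi> g M b)
      = (\<Sum>M\<in>?G. (Dw \<phi> g d (Einv d M ?e) + Re (Ow \<phi> g d (Einv d M ?e))) / ?q)"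
  proof (rule sum.cong[OF refl])
    fix M assume M: "M \<in> ?G"
    have "(\<Sum>b\<in>vspace (d-1). meas_prob d \<phi> M b * accept_prob d \<phi> g M b)
        = (\<Sum>b\<in>vspace (d-1). (cmod (\<Sum>t\<in>UNIV. Yv \<phi> g (Einv d M (bt d b t)) (Einv d M ?e)))\<^sup>2 / ?q)"
      using macc[OF d M _ pos] by simp
    also have "\<dots> = (\<Sum>b\<in>vspace (d-1). (cmod (\<Sum>t\<in>UNIV. Yv \<phi> g (Einv d M (bt d b t)) (Einv d M ?e)))\<^sup>2) / ?q"
      by (simp add: sum_divide_distrib)
    also have "\<dots> = (Dw \<phi> g d (Einv d M ?e) + Re (Ow \<phi> g d (Einv d M ?e))) / ?q"
      unfolding sumb[OF d M] K_split ..
    finally show "(\<Sum>b\<in>vspace (d-1). meas_prob d \<phi> M b * accept_prob d \<phi> g M b)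
        = (Dw \<phi> g d (Einv d M ?e) + Re (Ow \<phi> g d (Einv d M ?e))) / ?q" .
  qed
  have D: "(\<Sum>M\<in>?G. Dw \<phi> g d (Einv d M ?e)) \<le> real (card ?G)"
  proof -
    have "(\<Sum>M\<in>?G. Dw \<phi> g d (Einv d M ?e)) \<le> (\<Sum>M\<in>?G. 1)"
      by (rule sum_mono) (rule D_le[OF norm])
    then show ?thesis by simp
  qed
  have O: "(\<Sum>M\<in>?G. Re (Ow \<phi> g d (Einv d M ?e))) \<le> ?ne * ?C"
  proof -
    have "(\<Sum>M\<in>?G. Re (Ow \<phi> g d (Einv d M ?e))) = ?ne * (\<Sum>w\<in>?V0. Re (Ow \<phi> g d w))"
      by (rule GL_sum[OF d])
    also have "\<dots> = ?ne * Re (\<Sum>w\<in>?V0. Ow \<phi> g d w)" by simp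
    also have "\<dots> \<le> ?ne * ?C" by (rule mult_left_mono) (simp_all only: complex_Re_le_cmod of_nat_0_le_iff)
    finally show ?thesis .
  qed
  have nG: "real (card ?G) = ?ne * (?q ^ d - 1)"
  proof -
    have "(\<Sum>M\<in>?G. (\<lambda>_. 1::real) (Einv d M ?e)) = ?ne * (\<Sum>w\<in>?V0. (\<lambda>_. 1::real) w)"
      by (rule GL_sum[OF d])
    then show ?thesis using card_V0[where 'f='f and d=d] by simp
  qed
  have G0: "real (card ?G) > 0"
  proof (rule ccontr)
    assume "\<not> real (card ?G) > 0"
    then have "card ?G = 0" by simp
    then have "V_QLDT d \<phi> g = 0" unfolding V_QLDT_def by simp
    then show False using gam q2 by simp
  qed
  have qd: "?q ^ d - 1 > 0"
  proof -
    have "?q ^ 1 \<le> ?q ^ d" using q2 d by (intro power_increasing) simp_all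
    then have h: "?q \<le> ?q ^ d" by (simp only: power_one_right)
    from h q2 show ?thesis by linarith
  qed
  have ne0: "?ne > 0" using G0 nG qd by (simp add: zero_less_mult_iff)
  have "V_QLDT d \<phi> g = (\<Sum>M\<in>?G. (Dw \<phi> g d (Einv d M ?e) + Re (Ow \<phi> g d (Einv d M ?e))) / ?q) / real (card ?G)"
    unfolding V_QLDT_def X ..
  also have "\<dots> = ((\<Sum>M\<in>?G. Dw \<phi> g d (Einv d M ?e)) + (\<Sum>M\<in>?G. Re (Ow \<phi> g d (Einv d M ?e)))) / (?q * real (card ?G))"
    by (simp add: sum_divide_distrib[symmetric] sum.distrib)
  also have "\<dots> \<le> (real (card ?G) + ?ne * ?C) / (?q * real (card ?G))"
    using D O G0 q2 by (intro divide_right_mono) simp_all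
  finally have "V_QLDT d \<phi> g \<le> (real (card ?G) + ?ne * ?C) / (?q * real (card ?G))" .
  then have "?q * V_QLDT d \<phi> g \<le> ?q * ((real (card ?G) + ?ne * ?C) / (?q * real (card ?G)))"
    using q2 by (intro mult_left_mono) simp_all
  also have "?q * ((real (card ?G) + ?ne * ?C) / (?q * real (card ?G))) = (real (card ?G) + ?ne * ?C) / real (card ?G)"
    using q2 by simp
  also have "\<dots> = 1 + ?C / (?q ^ d - 1)"
    by (rule aux_frac[OF nG ne0 qd])
  finally show ?thesis by simp
qed

lemma flat3: "(\<Sum>w\<in>A. \<Sum>z\<in>B. \<Sum>s\<in>C. f w z s) = (\<Sum>p\<in>A \<times> (B \<times> C). f (fst p) (fst (snd p)) (snd (snd p)))"
proof -
  have "(\<Sum>w\<in>A. \<Sum>z\<in>B. \<Sum>s\<in>C. f w z s) = (\<Sum>w\<in>A. \<Sum>q\<in>B \<times> C. f w (fst q) (snd q))"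
    by (rule sum.cong[OF refl]) (simp add: sum.cartesian_product case_prod_beta')
  also have "\<dots> = (\<Sum>p\<in>A \<times> (B \<times> C). f (fst p) (fst (snd p)) (snd (snd p)))"
    by (simp add: sum.cartesian_product case_prod_beta')
  finally show ?thesis .
qed

lemma shift_sum_le:
  fixes h :: "(nat \<Rightarrow> 'f::{finite,field}) \<Rightarrow> real"
  assumes z: "z \<in> vspace d" and s: "s \<noteq> 0" and h: "\<And>x. h x \<ge> 0"
  shows "(\<Sum>w\<in>vspace d - {\<lambda>_. 0}. h (\<lambda>i. z i + s * w i)) \<le> (\<Sum>x\<in>vspace d. h x)"
proof -
  let ?m = "\<lambda>w. \<lambda>i. z i + s * w i"
  have inj: "inj_on ?m (vspace d - {\<lambda>_. 0})"
  proof (rule inj_onI)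
    fix w w' assume "?m w = ?m w'"
    then have "\<And>i. z i + s * w i = z i + s * w' i" by metis
    then show "w = w'" using s by (simp add: fun_eq_iff)
  qed
  have sub: "?m ` (vspace d - {\<lambda>_. 0}) \<subseteq> vspace d" using z by (auto simp: vspace_def)
  have "(\<Sum>w\<in>vspace d - {\<lambda>_. 0}. h (?m w)) = (\<Sum>x\<in>?m ` (vspace d - {\<lambda>_. 0}). h x)"
    using sum.reindex[OF inj, of h] by simp
  also have "\<dots> \<le> (\<Sum>x\<in>vspace d. h x)"
    by (rule sum_mono2[OF finite_vspace sub]) (simp add: h)
  finally show ?thesis .
qed

lemma card_nonzero: "real (card (UNIV - {0} :: 'f::{finite,field} set)) = real (card (UNIV::'f set)) - 1"
proof -
  have "card (UNIV - {0} :: 'f set) = card (UNIV::'f set) - 1" by (simp add: card_Diff_singleton)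
  moreover have "card (UNIV::'f set) \<ge> 1" using card_ge2[where 'f='f] by simp
  ultimately show ?thesis by (simp add: of_nat_diff)
qed

lemma CS_bound:
  fixes \<phi> :: "(nat \<Rightarrow> 'f::{finite,field}) \<Rightarrow> 'f \<Rightarrow> complex"
  assumes norm: "(\<Sum>z\<in>vspace d. \<Sum>y\<in>UNIV. (cmod (\<phi> z y))\<^sup>2) = 1"
    and pos: "\<forall>z\<in>vspace d. amp_norm \<phi> z > 0"
  shows "(cmod (\<Sum>w\<in>vspace d - {\<lambda>_. 0}. Ow \<phi> g d w))\<^sup>2
     \<le> (real (card (UNIV::'f set)) - 1) ^ 3 *
        (\<Sum>z\<in>vspace d. \<Sum>l\<in>{l\<in>lines d. z \<in> l}. (cmod (\<phi> z (g l z)))\<^sup>2 / (amp_norm \<phi> z)\<^sup>2)"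
proof -
  let ?q = "real (card (UNIV::'f set))"
  let ?V = "vspace d :: (nat \<Rightarrow> 'f) set"
  let ?VN = "vspace d - {\<lambda>_. 0} :: (nat \<Rightarrow> 'f) set"
  let ?S = "UNIV - {0} :: 'f set"
  let ?amp = "amp_norm \<phi>"
  let ?Y = "Yv \<phi> g"
  let ?T = "\<Sum>z\<in>vspace d. \<Sum>l\<in>{l\<in>lines d. z \<in> l}. (cmod (\<phi> z (g l z)))\<^sup>2 / (amp_norm \<phi> z)\<^sup>2"
  let ?a = "\<lambda>z w. (cmod (?Y z w))\<^sup>2 / (?amp z)\<^sup>2"
  let ?al = "\<lambda>w z s. ?amp z * ?amp (\<lambda>i. z i + s * w i)"
  let ?be = "\<lambda>w z s. (cmod (?Y z w) / ?amp z) * (cmod (?Y (\<lambda>i. z i + s * w i) w) / ?amp (\<lambda>i. z i + s * w i))"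
  have q1: "?q \<ge> 2" using card_ge2[where 'f='f] by simp
  have zsw: "(\<lambda>i. z i + s * w i) \<in> ?V" if "z \<in> ?V" "w \<in> ?V" for z w s
    using that by (simp add: vspace_def)
  have a_le: "?a z w \<le> 1" and a_ge: "?a z w \<ge> 0" if "z \<in> ?V" for z w
  proof -
    have "(cmod (?Y z w))\<^sup>2 \<le> (?amp z)\<^sup>2" unfolding amp_sq Yv_def by (rule member_le_sum) simp_all
    moreover have "(?amp z)\<^sup>2 > 0" using pos that by force
    ultimately show "?a z w \<le> 1" by (simp add: divide_le_eq_1)
    show "?a z w \<ge> 0" by simp
  qed
  have tri: "cmod (\<Sum>w\<in>?VN. Ow \<phi> g d w) \<le> (\<Sum>w\<in>?VN. \<Sum>z\<in>?V. \<Sum>s\<in>?S. ?al w z s * ?be w z s)"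
  proof -
    have "cmod (\<Sum>w\<in>?VN. Ow \<phi> g d w) \<le> (\<Sum>w\<in>?VN. cmod (Ow \<phi> g d w))" by (rule norm_sum)
    also have "\<dots> \<le> (\<Sum>w\<in>?VN. \<Sum>z\<in>?V. \<Sum>s\<in>?S. ?al w z s * ?be w z s)"
    proof (rule sum_mono)
      fix w assume w: "w \<in> ?VN"
      have "cmod (Ow \<phi> g d w) \<le> (\<Sum>z\<in>?V. cmod (\<Sum>s\<in>?S. ?Y z w * cnj (?Y (\<lambda>i. z i + s * w i) w)))"
        unfolding Ow_def by (rule norm_sum)
      also have "\<dots> \<le> (\<Sum>z\<in>?V. \<Sum>s\<in>?S. ?al w z s * ?be w z s)"
      proof (rule sum_mono)
        fix z assume z: "z \<in> ?V"
        have "cmod (\<Sum>s\<in>?S. ?Y z w * cnj (?Y (\<lambda>i. z i + s * w i) w)) \<le> (\<Sum>s\<in>?S. cmod (?Y z w * cnj (?Y (\<lambda>i. z i + s * w i) w)))"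
          by (rule norm_sum)
        also have "\<dots> = (\<Sum>s\<in>?S. ?al w z s * ?be w z s)"
        proof (rule sum.cong[OF refl])
          fix s
          have p1: "?amp z > 0" using pos z by blast
          have p2: "?amp (\<lambda>i. z i + s * w i) > 0" using pos zsw[OF z, of w s] w by blast
          show "cmod (?Y z w * cnj (?Y (\<lambda>i. z i + s * w i) w)) = ?al w z s * ?be w z s"
            using p1 p2 by (simp add: norm_mult)
        qed
        finally show "cmod (\<Sum>s\<in>?S. ?Y z w * cnj (?Y (\<lambda>i. z i + s * w i) w)) \<le> (\<Sum>s\<in>?S. ?al w z s * ?be w z s)" .
      qed
      finally show "cmod (Ow \<phi> g d w) \<le> (\<Sum>z\<in>?V. \<Sum>s\<in>?S. ?al w z s * ?be w z s)" .
    qed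
    finally show ?thesis .
  qed
  have cs: "(\<Sum>w\<in>?VN. \<Sum>z\<in>?V. \<Sum>s\<in>?S. ?al w z s * ?be w z s)\<^sup>2
      \<le> (\<Sum>w\<in>?VN. \<Sum>z\<in>?V. \<Sum>s\<in>?S. (?al w z s)\<^sup>2) * (\<Sum>w\<in>?VN. \<Sum>z\<in>?V. \<Sum>s\<in>?S. (?be w z s)\<^sup>2)"
    unfolding flat3 by (rule Cauchy_Schwarz_ineq_sum)
  have al: "(\<Sum>w\<in>?VN. \<Sum>z\<in>?V. \<Sum>s\<in>?S. (?al w z s)\<^sup>2) \<le> ?q - 1"
  proof -
    have "(\<Sum>w\<in>?VN. \<Sum>z\<in>?V. \<Sum>s\<in>?S. (?al w z s)\<^sup>2) = (\<Sum>z\<in>?V. \<Sum>w\<in>?VN. \<Sum>s\<in>?S. (?al w z s)\<^sup>2)"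
      by (rule sum.swap)
    also have "\<dots> = (\<Sum>z\<in>?V. (?amp z)\<^sup>2 * (\<Sum>s\<in>?S. \<Sum>w\<in>?VN. (?amp (\<lambda>i. z i + s * w i))\<^sup>2))"
      by (simp add: sum_distrib_left power_mult_distrib sum.swap[of _ ?VN ?S])
    also have "\<dots> \<le> (\<Sum>z\<in>?V. (?amp z)\<^sup>2 * (\<Sum>s\<in>?S. 1))"
    proof (rule sum_mono, rule mult_left_mono)
      fix z assume z: "z \<in> ?V"
      show "(\<Sum>s\<in>?S. \<Sum>w\<in>?VN. (?amp (\<lambda>i. z i + s * w i))\<^sup>2) \<le> (\<Sum>s\<in>?S. 1)"
      proof (rule sum_mono)
        fix s assume s: "s \<in> ?S"
        have "(\<Sum>w\<in>?VN. (?amp (\<lambda>i. z i + s * w i))\<^sup>2) \<le> (\<Sum>x\<in>?V. (?amp x)\<^sup>2)"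
          using shift_sum_le[OF z, of s "\<lambda>x. (?amp x)\<^sup>2"] s by simp
        also have "\<dots> = 1" using norm by (simp add: amp_sq)
        finally show "(\<Sum>w\<in>?VN. (?amp (\<lambda>i. z i + s * w i))\<^sup>2) \<le> 1" .
      qed
    qed simp
    also have "\<dots> = (\<Sum>z\<in>?V. (?amp z)\<^sup>2) * (?q - 1)"
      using card_nonzero[where 'f='f] by (simp add: sum_distrib_right)
    also have "\<dots> = ?q - 1" using norm by (simp add: amp_sq)
    finally show ?thesis .
  qed
  have be: "(\<Sum>w\<in>?VN. \<Sum>z\<in>?V. \<Sum>s\<in>?S. (?be w z s)\<^sup>2) \<le> (?q - 1)\<^sup>2 * ?T"
  proof -
    have "(\<Sum>w\<in>?VN. \<Sum>z\<in>?V. \<Sum>s\<in>?S. (?be w z s)\<^sup>2) \<le> (\<Sum>w\<in>?VN. \<Sum>z\<in>?V. \<Sum>s\<in>?S. ?a z w)"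
    proof (intro sum_mono)
      fix w z s assume w: "w \<in> ?VN" and z: "z \<in> ?V"
      have z': "(\<lambda>i. z i + s * w i) \<in> ?V" using zsw[OF z, of w s] w by blast
      have "(?be w z s)\<^sup>2 = ?a z w * ?a (\<lambda>i. z i + s * w i) w"
        by (simp add: power_mult_distrib power_divide)
      also have "\<dots> \<le> ?a z w * 1"
        by (rule mult_left_mono[OF a_le[OF z'] a_ge[OF z]])
      finally show "(?be w z s)\<^sup>2 \<le> ?a z w" by simp
    qed
    also have "\<dots> = (\<Sum>w\<in>?VN. \<Sum>z\<in>?V. (?q - 1) * ?a z w)"
      using card_nonzero[where 'f='f] by simp
    also have "\<dots> = (?q - 1) * (\<Sum>z\<in>?V. \<Sum>w\<in>?VN. ?a z w)"
      by (simp add: sum_distrib_left sum.swap[of _ ?VN ?V])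
    also have "(\<Sum>z\<in>?V. \<Sum>w\<in>?VN. ?a z w) = (\<Sum>z\<in>?V. (?q - 1) * (\<Sum>l\<in>{l\<in>lines d. z \<in> l}. (cmod (\<phi> z (g l z)))\<^sup>2 / (amp_norm \<phi> z)\<^sup>2))"
    proof (rule sum.cong[OF refl])
      fix z assume z: "z \<in> ?V"
      show "(\<Sum>w\<in>?VN. ?a z w) = (?q - 1) * (\<Sum>l\<in>{l\<in>lines d. z \<in> l}. (cmod (\<phi> z (g l z)))\<^sup>2 / (amp_norm \<phi> z)\<^sup>2)"
        using sum_dirs[OF z, of "\<lambda>l. (cmod (\<phi> z (g l z)))\<^sup>2 / (amp_norm \<phi> z)\<^sup>2"] by (simp add: Yv_def)
    qed
    also have "(?q - 1) * (\<Sum>z\<in>?V. (?q - 1) * (\<Sum>l\<in>{l\<in>lines d. z \<in> l}. (cmod (\<phi> z (g l z)))\<^sup>2 / (amp_norm \<phi> z)\<^sup>2)) = (?q - 1)\<^sup>2 * ?T"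
      by (simp only: sum_distrib_left[symmetric]) (simp add: power2_eq_square)
    finally show ?thesis .
  qed
  have C0: "cmod (\<Sum>w\<in>?VN. Ow \<phi> g d w) \<ge> 0" by simp
  have "(cmod (\<Sum>w\<in>?VN. Ow \<phi> g d w))\<^sup>2 \<le> (\<Sum>w\<in>?VN. \<Sum>z\<in>?V. \<Sum>s\<in>?S. ?al w z s * ?be w z s)\<^sup>2"
    using tri C0 by (rule power_mono)
  also have "\<dots> \<le> (\<Sum>w\<in>?VN. \<Sum>z\<in>?V. \<Sum>s\<in>?S. (?al w z s)\<^sup>2) * (\<Sum>w\<in>?VN. \<Sum>z\<in>?V. \<Sum>s\<in>?S. (?be w z s)\<^sup>2)"
    by (rule cs)
  also have "\<dots> \<le> (?q - 1) * ((?q - 1)\<^sup>2 * ?T)"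
  proof (rule mult_mono[OF al be])
    show "0 \<le> ?q - 1" using q1 by linarith
    show "0 \<le> (\<Sum>w\<in>?VN. \<Sum>z\<in>?V. \<Sum>s\<in>?S. (?be w z s)\<^sup>2)" by (simp add: sum_nonneg)
  qed
  also have "\<dots> = (?q - 1) ^ 3 * ?T" by (simp add: power3_eq_cube power2_eq_square)
  finally show ?thesis .
qed

lemma aux_AB:
  fixes q P R T :: real
  assumes "q \<noteq> 0" "P \<noteq> 0" "R \<noteq> 0"
  shows "(q - 1) ^ 3 * T / R\<^sup>2 / q\<^sup>2 = ((q - 1) * T / (P * R)) * ((q - 1)\<^sup>2 * P / (q\<^sup>2 * R))"
  using assms by (simp add: field_simps power2_eq_square power3_eq_cube)

lemma final_arith:
  fixes q P g C T :: real
  assumes q: "q \<ge> 2" and P: "P \<ge> q\<^sup>2" and g1: "g \<ge> 1 / q"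
    and gC: "q * g - 1 \<le> C / (P - 1)" and C: "C\<^sup>2 \<le> (q - 1) ^ 3 * T" and T: "T \<ge> 0"
  shows "(g - 1 / q)\<^sup>2 \<le> 1 / (P * ((P - 1) / (q - 1))) * T"
proof -
  have q0: "q > 0" using q by simp
  have "q\<^sup>2 \<ge> 2\<^sup>2" using q by (intro power_mono) simp_all
  then have P1: "P - 1 > 0" using P by simp
  let ?x = "q * g - 1"
  have x0: "?x \<ge> 0" using g1 q0 by (simp add: field_simps)
  have s1: "?x\<^sup>2 \<le> (C / (P - 1))\<^sup>2" using gC x0 by (rule power_mono)
  also have "\<dots> = C\<^sup>2 / (P - 1)\<^sup>2" by (simp add: power_divide)
  also have "\<dots> \<le> (q - 1) ^ 3 * T / (P - 1)\<^sup>2" using C by (rule divide_right_mono) simp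
  finally have s: "?x\<^sup>2 \<le> (q - 1) ^ 3 * T / (P - 1)\<^sup>2" .
  have eq1: "(g - 1 / q)\<^sup>2 = ?x\<^sup>2 / q\<^sup>2" using q0 by (simp add: field_simps)
  have key: "(q - 1)\<^sup>2 * P \<le> q\<^sup>2 * (P - 1)"
  proof -
    have e1: "(q - 1)\<^sup>2 * P = q\<^sup>2 * P - 2 * q * P + P" by (simp add: algebra_simps power2_eq_square)
    have e2: "q\<^sup>2 * (P - 1) = q\<^sup>2 * P - q\<^sup>2" by (simp add: algebra_simps)
    have "P * (2 * q - 1) \<ge> q\<^sup>2 * (2 * q - 1)" using P q by (intro mult_right_mono) simp_all
    moreover have "q\<^sup>2 * (2 * q - 1) \<ge> q\<^sup>2 * 1" using q by (intro mult_left_mono) simp_all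
    ultimately have "P * (2 * q - 1) \<ge> q\<^sup>2" by simp
    then have "2 * q * P - P \<ge> q\<^sup>2" by (simp add: algebra_simps)
    then show ?thesis using e1 e2 by linarith
  qed
  let ?A = "(q - 1) * T / (P * (P - 1))"
  let ?B = "(q - 1)\<^sup>2 * P / (q\<^sup>2 * (P - 1))"
  have A0: "?A \<ge> 0" using q T P1 P by (intro divide_nonneg_pos mult_nonneg_nonneg mult_pos_pos) simp_all
  have P0: "P > 0" using P1 by simp
  have B1: "?B \<le> 1" using key q0 P1 by (simp add: divide_le_eq_1)
  have "(g - 1 / q)\<^sup>2 \<le> (q - 1) ^ 3 * T / (P - 1)\<^sup>2 / q\<^sup>2"
    unfolding eq1 using s q0 by (intro divide_right_mono) simp_all
  also have "\<dots> = ?A * ?B" using aux_AB[of q P "P - 1" T] q0 P0 P1 by simp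
  also have "\<dots> \<le> ?A * 1" by (rule mult_left_mono[OF B1 A0])
  also have "\<dots> = 1 / (P * ((P - 1) / (q - 1))) * T" using q0 P0 P1 q by (simp add: field_simps)
  finally show ?thesis .
qed

lemma card_filter_real:
  assumes "finite A"
  shows "real (card {x\<in>A. P x}) = (\<Sum>x\<in>A. if P x then 1 else 0)"
  using assms by (simp add: sum.If_cases Int_def conj_commute)

lemma double_count:
  fixes R :: "(nat \<Rightarrow> 'f::{finite,field}) set \<Rightarrow> (nat \<Rightarrow> 'f) \<Rightarrow> bool"
  shows "(\<Sum>l\<in>lines d. real (card {z\<in>l. R l z})) = (\<Sum>z\<in>vspace d. real (card {l\<in>lines d. z \<in> l \<and> R l z}))"
proof -
  have "(\<Sum>l\<in>lines d. real (card {z\<in>l. R l z})) = (\<Sum>l\<in>lines d. \<Sum>z\<in>vspace d. if z \<in> l \<and> R l z then 1 else 0)"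
  proof (rule sum.cong[OF refl])
    fix l :: "(nat \<Rightarrow> 'f) set" assume l: "l \<in> lines d"
    then have "l \<subseteq> vspace d" using line_sub by (auto simp: lines_def)
    then have "{z\<in>l. R l z} = {z\<in>vspace d. z \<in> l \<and> R l z}" by auto
    then show "real (card {z\<in>l. R l z}) = (\<Sum>z\<in>vspace d. if z \<in> l \<and> R l z then 1 else 0)"
      using card_filter_real[OF finite_vspace, where P="\<lambda>z. z \<in> l \<and> R l z"] by simp
  qed
  also have "\<dots> = (\<Sum>z\<in>vspace d. \<Sum>l\<in>lines d. if z \<in> l \<and> R l z then 1 else 0)" by (rule sum.swap)
  also have "\<dots> = (\<Sum>z\<in>vspace d. real (card {l\<in>lines d. z \<in> l \<and> R l z}))"
  proof (rule sum.cong[OF refl])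
    fix z :: "nat \<Rightarrow> 'f"
    show "(\<Sum>l\<in>lines d. if z \<in> l \<and> R l z then 1 else 0) = real (card {l\<in>lines d. z \<in> l \<and> R l z})"
      using card_filter_real[OF finite_lines[of d], where P="\<lambda>l. z \<in> l \<and> R l z"] by simp
  qed
  finally show ?thesis .
qed

lemma Agr_bound:
  fixes \<phi> :: "(nat \<Rightarrow> 'f::{finite,field}) \<Rightarrow> 'f \<Rightarrow> complex"
  assumes pos: "\<forall>z\<in>vspace d. amp_norm \<phi> z > 0" and d: "d \<ge> 1"
  shows "\<exists>f' :: (nat \<Rightarrow> 'f) \<Rightarrow> 'f. Agr d f' g \<ge>
     1 / (real (card (UNIV :: 'f set)) ^ d * ((real (card (UNIV :: 'f set)) ^ d - 1) / (real (card (UNIV :: 'f set)) - 1)))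
              * (\<Sum>z\<in>vspace d. \<Sum>l\<in>{l\<in>lines d. z \<in> l}.
                   (cmod (\<phi> z (g l z)))\<^sup>2 / (amp_norm \<phi> z)\<^sup>2)"
proof -
  let ?q = "real (card (UNIV :: 'f set))"
  let ?P = "?q ^ d"
  let ?cnt = "\<lambda>z y. card {l\<in>lines d. z \<in> l \<and> g l z = y}"
  have "\<forall>z. \<exists>y. \<forall>y'. ?cnt z y' \<le> ?cnt z y"
  proof
    fix z
    let ?m = "Max (?cnt z ` UNIV)"
    have "?m \<in> ?cnt z ` UNIV" by (rule Max_in) simp_all
    then obtain y where y: "?cnt z y = ?m" by (metis (no_types, lifting) imageE)
    have "?cnt z y' \<le> ?m" for y' by (rule Max_ge) simp_all
    then have "\<forall>y'. ?cnt z y' \<le> ?cnt z y" using y by simp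
    then show "\<exists>y. \<forall>y'. ?cnt z y' \<le> ?cnt z y" by blast
  qed
  from choice[OF this] obtain f where f0: "\<forall>z y'. ?cnt z y' \<le> ?cnt z (f z)" by blast
  have f: "\<And>z y'. ?cnt z y' \<le> ?cnt z (f z)" using f0 by blast
  have q2: "?q \<ge> 2" using card_ge2[where 'f='f] by simp
  have Pq: "?P \<ge> ?q" using q2 d by (metis power_increasing power_one_right one_le_numeral order_trans)
  have Tz: "(\<Sum>l\<in>{l\<in>lines d. z \<in> l}. (cmod (\<phi> z (g l z)))\<^sup>2 / (amp_norm \<phi> z)\<^sup>2) \<le> real (?cnt z (f z))"
    if z: "z \<in> vspace d" for z
  proof -
    have a: "(amp_norm \<phi> z)\<^sup>2 > 0" using pos z by force
    have "(\<Sum>l\<in>{l\<in>lines d. z \<in> l}. (cmod (\<phi> z (g l z)))\<^sup>2)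
        = (\<Sum>y\<in>UNIV. \<Sum>l\<in>{l\<in>{l\<in>lines d. z \<in> l}. g l z = y}. (cmod (\<phi> z (g l z)))\<^sup>2)"
      by (rule sum.group[symmetric]) (simp_all add: finite_lines)
    also have "\<dots> = (\<Sum>y\<in>UNIV. real (?cnt z y) * (cmod (\<phi> z y))\<^sup>2)"
    proof (rule sum.cong[OF refl])
      fix y
      have "{l\<in>{l\<in>lines d. z \<in> l}. g l z = y} = {l\<in>lines d. z \<in> l \<and> g l z = y}" by auto
      then show "(\<Sum>l\<in>{l\<in>{l\<in>lines d. z \<in> l}. g l z = y}. (cmod (\<phi> z (g l z)))\<^sup>2) = real (?cnt z y) * (cmod (\<phi> z y))\<^sup>2"
        by simp
    qed
    also have "\<dots> \<le> (\<Sum>y\<in>UNIV. real (?cnt z (f z)) * (cmod (\<phi> z y))\<^sup>2)"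
      by (rule sum_mono, rule mult_right_mono) (simp_all add: f)
    also have "\<dots> = real (?cnt z (f z)) * (amp_norm \<phi> z)\<^sup>2" by (simp add: amp_sq sum_distrib_left)
    finally have "(\<Sum>l\<in>{l\<in>lines d. z \<in> l}. (cmod (\<phi> z (g l z)))\<^sup>2) \<le> real (?cnt z (f z)) * (amp_norm \<phi> z)\<^sup>2" .
    then show ?thesis using a by (simp add: sum_divide_distrib[symmetric] pos_divide_le_eq)
  qed
  have T: "(\<Sum>z\<in>vspace d. \<Sum>l\<in>{l\<in>lines d. z \<in> l}. (cmod (\<phi> z (g l z)))\<^sup>2 / (amp_norm \<phi> z)\<^sup>2)
      \<le> (\<Sum>z\<in>vspace d. real (?cnt z (f z)))"
    by (rule sum_mono) (rule Tz)
  have cl: "card l = card (UNIV::'f set)" if "l \<in> lines d" for l :: "(nat \<Rightarrow> 'f) set"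
    using that card_line[where 'f='f] by (auto simp: lines_def)
  have Lq: "real (card (lines d :: (nat \<Rightarrow> 'f) set set)) * ?q = ?P * ((?P - 1) / (?q - 1))"
  proof -
    have "(\<Sum>l\<in>(lines d :: (nat \<Rightarrow> 'f) set set). real (card {z\<in>l. True})) = (\<Sum>l\<in>(lines d :: (nat \<Rightarrow> 'f) set set). ?q)"
      by (rule sum.cong) (simp_all add: cl)
    then have "real (card (lines d :: (nat \<Rightarrow> 'f) set set)) * ?q = (\<Sum>l\<in>(lines d :: (nat \<Rightarrow> 'f) set set). real (card {z\<in>l. True}))"
      by simp
    also have "\<dots> = (\<Sum>z\<in>(vspace d :: (nat \<Rightarrow> 'f) set). real (card {l\<in>lines d. z \<in> l \<and> True}))" by (rule double_count)
    also have "\<dots> = (\<Sum>z\<in>(vspace d :: (nat \<Rightarrow> 'f) set). (?P - 1) / (?q - 1))"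
    proof (rule sum.cong[OF refl])
      fix z :: "nat \<Rightarrow> 'f" assume z: "z \<in> vspace d"
      have "(?q - 1) * real (card {l\<in>lines d. z \<in> l}) = ?P - 1" by (rule card_lines_through[OF z])
      then show "real (card {l\<in>lines d. z \<in> l \<and> True}) = (?P - 1) / (?q - 1)"
        using q2 by (simp add: field_simps)
    qed
    also have "\<dots> = ?P * ((?P - 1) / (?q - 1))" by (simp add: card_vspace)
    finally show ?thesis .
  qed
  have Agr_eq: "Agr d f g = (\<Sum>z\<in>vspace d. real (?cnt z (f z))) / (?P * ((?P - 1) / (?q - 1)))"
  proof -
    have "Agr d f g = (\<Sum>l\<in>lines d. real (card {z\<in>l. f z = g l z}) / ?q) / real (card (lines d :: (nat \<Rightarrow> 'f) set set))"
      unfolding Agr_def Agr_line_def by (simp add: cl cong: sum.cong)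
    also have "\<dots> = (\<Sum>l\<in>lines d. real (card {z\<in>l. f z = g l z})) / (real (card (lines d :: (nat \<Rightarrow> 'f) set set)) * ?q)"
      by (simp add: sum_divide_distrib[symmetric])
    also have "(\<Sum>l\<in>lines d. real (card {z\<in>l. f z = g l z})) = (\<Sum>z\<in>vspace d. real (?cnt z (f z)))"
      using double_count[where d=d and R="\<lambda>l z. f z = g l z"] by (simp add: eq_commute)
    finally show ?thesis using Lq by simp
  qed
  have P1: "?P - 1 > 0" using q2 Pq by linarith
  have q1: "?q - 1 > 0" using q2 by linarith
  have den: "?P * ((?P - 1) / (?q - 1)) > 0" using P1 q1 by (intro mult_pos_pos divide_pos_pos) simp_all
  have "1 / (?P * ((?P - 1) / (?q - 1))) * (\<Sum>z\<in>vspace d. \<Sum>l\<in>{l\<in>lines d. z \<in> l}. (cmod (\<phi> z (g l z)))\<^sup>2 / (amp_norm \<phi> z)\<^sup>2)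
      \<le> 1 / (?P * ((?P - 1) / (?q - 1))) * (\<Sum>z\<in>vspace d. real (?cnt z (f z)))"
  proof (rule mult_left_mono[OF T])
    show "0 \<le> 1 / (?P * ((?P - 1) / (?q - 1)))" using divide_pos_pos[OF zero_less_one den] by linarith
  qed
  also have "\<dots> = Agr d f g" using Agr_eq by simp
  finally show ?thesis by blast
qed

theorem mainTheorem7:
  fixes \<phi> :: "(nat \<Rightarrow> 'f::{finite,field}) \<Rightarrow> 'f \<Rightarrow> complex"
    and g :: "(nat \<Rightarrow> 'f) set \<Rightarrow> (nat \<Rightarrow> 'f) \<Rightarrow> 'f"
    and a d r :: nat
  assumes "card (UNIV :: 'f set) = 2 ^ a"
    and "d \<ge> 2"
    and "low_degree_family d r g"
    and "(\<Sum>z\<in>vspace d. \<Sum>y\<in>UNIV. (cmod (\<phi> z y))\<^sup>2) = 1"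
    and "\<forall>z\<in>vspace d. amp_norm \<phi> z > 0"
    and "V_QLDT d \<phi> g \<ge> 1 / real (card (UNIV :: 'f set))"
  shows "(V_QLDT d \<phi> g - 1 / real (card (UNIV :: 'f set)))\<^sup>2
           \<le> 1 / (real (card (UNIV :: 'f set)) ^ d * ((real (card (UNIV :: 'f set)) ^ d - 1) / (real (card (UNIV :: 'f set)) - 1)))
              * (\<Sum>z\<in>vspace d. \<Sum>l\<in>{l\<in>lines d. z \<in> l}.
                   (cmod (\<phi> z (g l z)))\<^sup>2 / (amp_norm \<phi> z)\<^sup>2)
       \<and> (\<exists>f' :: (nat \<Rightarrow> 'f) \<Rightarrow> 'f. Agr d f' g \<ge> (V_QLDT d \<phi> g - 1 / real (card (UNIV :: 'f set)))\<^sup>2)"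
proof -
  let ?q = "real (card (UNIV :: 'f set))"
  let ?T = "\<Sum>z\<in>vspace d. \<Sum>l\<in>{l\<in>lines d. z \<in> l}. (cmod (\<phi> z (g l z)))\<^sup>2 / (amp_norm \<phi> z)\<^sup>2"
  let ?C = "cmod (\<Sum>w\<in>vspace d - {\<lambda>_. 0}. Ow \<phi> g d w)"
  have d1: "d \<ge> 1" using assms(2) by simp
  have q2: "?q \<ge> 2" using card_ge2[where 'f='f] by simp
  have gb: "?q * V_QLDT d \<phi> g - 1 \<le> ?C / (?q ^ d - 1)"
    by (rule gamma_bound[OF d1 assms(4) assms(5) assms(6)])
  have cs: "?C\<^sup>2 \<le> (?q - 1) ^ 3 * ?T" by (rule CS_bound[OF assms(4) assms(5)])
  have T0: "?T \<ge> 0" by (simp add: sum_nonneg)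
  have "?q ^ 2 \<le> ?q ^ d" using q2 assms(2) by (intro power_increasing) simp_all
  then have P: "?q ^ d \<ge> ?q\<^sup>2" by simp
  have part1: "(V_QLDT d \<phi> g - 1 / ?q)\<^sup>2 \<le> 1 / (?q ^ d * ((?q ^ d - 1) / (?q - 1))) * ?T"
    by (rule final_arith[OF q2 P assms(6) gb cs T0])
  obtain f' :: "(nat \<Rightarrow> 'f) \<Rightarrow> 'f" where f': "Agr d f' g \<ge> 1 / (?q ^ d * ((?q ^ d - 1) / (?q - 1))) * ?T"
    using Agr_bound[OF assms(5) d1, of g] by blast
  have "Agr d f' g \<ge> (V_QLDT d \<phi> g - 1 / ?q)\<^sup>2" using part1 f' by linarith
  then show ?thesis using part1 by blast
qed

end
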